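(* Under the standing assumptions below, the function $h\mapsto c_*(h)=1/\sqrt{\varepsilon_0(h)}$ is $C^\infty$-smooth and strictly decreasing on $h\in[0,\infty)$. Moreover, with $$k_1=2\sqrt{\frac{p-1}{1+\frac p2\int_{\mathbb R}s^2K(s)\,ds}}-p\int_{\mathbb R}sK(s)\exp\!\Big(-s\sqrt{\frac{p-1}{1+\frac p2\int_{\mathbb R}s^2K(s)\,ds}}\Big)ds,\qquad k_2=\frac{1}{\sqrt{\ln p}}\ln\Big(p\int_{\mathbb R}K(s)e^{-\sqrt{\ln p}\,s}ds\Big),$$ one has $k_1>0$, $k_2>0$, and: 1. for $h\in[0,1]$: $$\max\Big\{2\sqrt{\tfrac{p-1}{p(2h+h^2)+1}},\ \tfrac{2\sqrt{\ln p}}{1+h}\Big\}<c_*(h)<\min\Big\{\tfrac{k_1}{1+h},\ \tfrac{k_2}{h}\Big\}$$ (where $k_2/h$ is read as $+\infty$ when $h=0$); 2. for $h\in[1,\infty)$: $$\max\Big\{2\sqrt{\tfrac{p-1}{p(2h+h^2)+1}},\ \tfrac{\sqrt{\ln p}}{h}\Big\}<c_*(h)<\min\Big\{\tfrac{k_1}{2},\ \tfrac{k_2}{\sqrt h}\Big\}.$$ Furthermore there exist constants $0<C_1<C_2$ such that $C_1/h\le c_*(h)\le C_2/h$ for all $h\ge1$.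
   Context: Let $K:\mathbb R\to[0,\infty)$ be measurable with $K(s)=K(-s)$ for all $s\in\mathbb R$, $\int_{\mathbb R}K(s)\,ds=1$, and $\int_{\mathbb R}K(s)e^{\lambda s}ds<\infty$ for every $\lambda\in\mathbb R$. Fix $p>1$. For $h\ge0$, $z\in\mathbb R$, $\varepsilon>0$ set $$\psi_h(z,\varepsilon)=\varepsilon z^2-z-1+p\,e^{-zh}\int_{\mathbb R}K(s)e^{-\sqrt{\varepsilon}\,zs}\,ds .$$ Standing fact (known, assumed): for every $h\ge0$ there is exactly one pair $(z_0(h),\varepsilon_0(h))$ with $z_0(h)>0$, $\varepsilon_0(h)>0$ satisfying $\psi_h(z_0,\varepsilon_0)=0$ and $\partial_z\psi_h(z_0,\varepsilon_0)=0$; moreover $\varepsilon_0(h)$ is the largest $\varepsilon>0$ for which $\psi_h(\cdot,\varepsilon)$ has a positive zero, and $\psi_h(z,\varepsilon)>0$ for all $z>0$ whenever $\varepsilon>\varepsilon_0(h)$. Define $c_*(h)=1/\sqrt{\varepsilon_0(h)}$ (this is the minimal speed of traveling waves for $u_t=u_{xx}-u+\int_{\mathbb R}K(x-s)g(u(t-h,s))ds$ with monostable $g$, $g'(0)=p$, $g(s)\le ps$). *)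

theory Defs
  imports "HOL-Analysis.Analysis"
begin

definition psi :: "(real \<Rightarrow> real) \<Rightarrow> real \<Rightarrow> real \<Rightarrow> real \<Rightarrow> real \<Rightarrow> real" where
  "psi K p h z \<epsilon> = \<epsilon> * z\<^sup>2 - z - 1
     + p * exp (- z * h) * (LINT s|lborel. K s * exp (- sqrt \<epsilon> * z * s))"

definition eps0 :: "(real \<Rightarrow> real) \<Rightarrow> real \<Rightarrow> real \<Rightarrow> real" where
  "eps0 K p h = (THE \<epsilon>. \<epsilon> > 0 \<and> (\<exists>z>0. psi K p h z \<epsilon> = 0 \<and> deriv (\<lambda>y. psi K p h y \<epsilon>) z = 0))"

definition cstar :: "(real \<Rightarrow> real) \<Rightarrow> real \<Rightarrow> real \<Rightarrow> real" where
  "cstar K p h = 1 / sqrt (eps0 K p h)"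

definition k1 :: "(real \<Rightarrow> real) \<Rightarrow> real \<Rightarrow> real" where
  "k1 K p = (let a = sqrt ((p - 1) / (1 + p / 2 * (LINT s|lborel. s\<^sup>2 * K s)))
             in 2 * a - p * (LINT s|lborel. s * K s * exp (- s * a)))"

definition k2 :: "(real \<Rightarrow> real) \<Rightarrow> real \<Rightarrow> real" where
  "k2 K p = 1 / sqrt (ln p) * ln (p * (LINT s|lborel. K s * exp (- sqrt (ln p) * s)))"

end

theory Submission
  imports Defs
begin


lemma pow_le_fact_exp:
  fixes x :: real assumes "0 \<le> x" shows "x ^ k \<le> fact k * exp x"
proof -
  obtain t where t: "exp x = (\<Sum>m<Suc k. x ^ m / fact m) + exp t / fact (Suc k) * x ^ Suc k"
    using Maclaurin_exp_le[of x "Suc k"] by blast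
  have "x ^ k / fact k \<le> (\<Sum>m<Suc k. x ^ m / fact m)"
    by (rule member_le_sum) (use assms in auto)
  moreover have "0 \<le> exp t / fact (Suc k) * x ^ Suc k" using assms by simp
  ultimately have "x ^ k / fact k \<le> exp x" using t by linarith
  then show ?thesis by (simp add: divide_simps mult.commute)
qed

lemma abs_pow_le_exp:
  fixes x :: real shows "\<bar>x\<bar> ^ k \<le> fact k * (exp x + exp (- x))"
proof -
  have "\<bar>x\<bar> ^ k \<le> fact k * exp \<bar>x\<bar>" by (rule pow_le_fact_exp) simp
  also have "exp \<bar>x\<bar> \<le> exp x + exp (-x)" by (cases "x \<ge> 0") auto
  hence "fact k * exp \<bar>x\<bar> \<le> fact k * (exp x + exp (- x))" by simp
  finally show ?thesis .
qed

lemma exp_taylor2_bound: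
  fixes x :: real shows "\<bar>exp x - 1 - x\<bar> \<le> x\<^sup>2 * exp \<bar>x\<bar>"
proof -
  obtain t where t: "\<bar>t\<bar> \<le> \<bar>x\<bar>" "exp x = (\<Sum>m<2. x ^ m / fact m) + exp t / fact 2 * x ^ 2"
    using Maclaurin_exp_le[of x 2] by blast
  have e: "exp x - 1 - x = exp t / 2 * x\<^sup>2" using t(2) by (simp add: numeral_2_eq_2)
  have "exp t \<le> exp \<bar>x\<bar>" using t(1) by simp
  hence "exp t / 2 * x\<^sup>2 \<le> x\<^sup>2 * exp \<bar>x\<bar>"
  proof -
    have "exp t / 2 \<le> exp \<bar>x\<bar>" using \<open>exp t \<le> exp \<bar>x\<bar>\<close> using exp_gt_zero[of t] by linarith
    hence "exp t / 2 * x\<^sup>2 \<le> exp \<bar>x\<bar> * x\<^sup>2" by (rule mult_right_mono) simp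
    thus ?thesis by (simp add: mult.commute)
  qed
  thus ?thesis unfolding e by (simp add: abs_of_nonneg)
qed

lemma deriv_quad:
  fixes f :: "real \<Rightarrow> real"
  assumes q: "\<And>t. \<bar>t\<bar> \<le> 1 \<Longrightarrow> \<bar>f (x + t) - f x - t * D\<bar> \<le> C * t\<^sup>2"
  shows "(f has_real_derivative D) (at x)"
proof -
  have "((\<lambda>t. (f (x + t) - f x) / t - D) \<longlongrightarrow> 0) (at 0)"
  proof (rule Lim_null_comparison)
    show "\<forall>\<^sub>F t in at 0. norm ((f (x + t) - f x) / t - D) \<le> \<bar>C\<bar> * \<bar>t\<bar>"
      unfolding eventually_at
    proof (intro exI[of _ 1] conjI allI ballI impI)
      fix t :: real assume "t \<noteq> 0 \<and> dist t 0 < 1"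
      hence t0: "t \<noteq> 0" and t1: "\<bar>t\<bar> \<le> 1" by auto
      have "(f (x + t) - f x) / t - D = (f (x + t) - f x - t * D) / t" using t0 by (simp add: field_simps)
      hence "norm ((f (x + t) - f x) / t - D) = \<bar>f (x + t) - f x - t * D\<bar> / \<bar>t\<bar>" by simp
      also have "\<dots> \<le> C * t\<^sup>2 / \<bar>t\<bar>" using q[OF t1] by (simp add: divide_right_mono)
      also have "\<dots> = C * \<bar>t\<bar>" using t0 by (simp add: power2_eq_square field_simps abs_mult_self_eq)
      also have "\<dots> \<le> \<bar>C\<bar> * \<bar>t\<bar>" by (simp add: mult_right_mono)
      finally show "norm ((f (x + t) - f x) / t - D) \<le> \<bar>C\<bar> * \<bar>t\<bar>" .
    qed simp
    show "((\<lambda>t. \<bar>C\<bar> * \<bar>t\<bar>) \<longlongrightarrow> 0) (at 0)"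
      by (rule tendsto_eq_intros refl | simp)+
  qed
  thus ?thesis by (simp add: DERIV_def LIM_zero_iff)
qed

lemma psi_aux_pos_pos:
  fixes x :: real assumes x: "0 < x"
  shows "0 < 1 - x\<^sup>2 / 2 - cosh x + x * sinh x"
proof -
  define f where "f y = 1 - y\<^sup>2 / 2 - cosh y + y * sinh y" for y :: real
  have d: "(f has_real_derivative y * (cosh y - 1)) (at y)" for y
    unfolding f_def by (auto intro!: derivative_eq_intros simp: algebra_simps)
  obtain z where z: "0 < z" "z < x" "f x - f 0 = (x - 0) * (z * (cosh z - 1))"
    using MVT2[OF x, of f "\<lambda>y. y * (cosh y - 1)"] d by blast
  have "cosh 0 < cosh z" using z by (intro cosh_real_strict_mono) auto
  hence "0 < z * (cosh z - 1)" using z by simp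
  hence "0 < f x - f 0" using z x by simp
  thus ?thesis by (simp add: f_def)
qed

lemma psi_aux_pos:
  fixes x :: real assumes x: "x \<noteq> 0"
  shows "0 < 1 - x\<^sup>2 / 2 - cosh x + x * sinh x"
proof (cases "x > 0")
  case True thus ?thesis by (rule psi_aux_pos_pos)
next
  case False
  hence "0 < - x" using x by simp
  from psi_aux_pos_pos[OF this] show ?thesis by simp
qed

lemma nonneg_from_second:
  fixes f f' f'' :: "real \<Rightarrow> real"
  assumes d1: "\<And>y. (f has_real_derivative f' y) (at y)"
    and d2: "\<And>y. (f' has_real_derivative f'' y) (at y)"
    and pos: "\<And>y. 0 \<le> f'' y" and f0: "f x = 0" and f'0: "f' x = 0"
  shows "0 \<le> f y"
proof (cases rule: linorder_cases[of y x])
  case less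
  obtain \<xi> where \<xi>: "y < \<xi>" "\<xi> < x" "f x - f y = (x - y) * f' \<xi>"
    using MVT2[OF less, of f f'] d1 by blast
  obtain \<eta> where \<eta>: "\<xi> < \<eta>" "\<eta> < x" "f' x - f' \<xi> = (x - \<xi>) * f'' \<eta>"
    using MVT2[OF \<xi>(2), of f' f''] d2 by blast
  have "0 \<le> (x - \<xi>) * f'' \<eta>" using \<xi> pos[of \<eta>] by simp
  hence "f' \<xi> \<le> 0" using \<eta>(3) f'0 by simp
  hence "(x - y) * f' \<xi> \<le> 0" using less by (simp add: mult_nonneg_nonpos)
  thus ?thesis using \<xi>(3) f0 by simp
next
  case equal thus ?thesis using f0 by simp
next
  case greater
  obtain \<xi> where \<xi>: "x < \<xi>" "\<xi> < y" "f y - f x = (y - x) * f' \<xi>"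
    using MVT2[OF greater, of f f'] d1 by blast
  obtain \<eta> where \<eta>: "x < \<eta>" "\<eta> < \<xi>" "f' \<xi> - f' x = (\<xi> - x) * f'' \<eta>"
    using MVT2[OF \<xi>(1), of f' f''] d2 by blast
  have "0 \<le> (\<xi> - x) * f'' \<eta>" using \<xi> pos[of \<eta>] by simp
  hence "0 \<le> f' \<xi>" using \<eta>(3) f'0 by simp
  hence "0 \<le> (y - x) * f' \<xi>" using greater by simp
  thus ?thesis using \<xi>(3) f0 by simp
qed

lemma exp_neg_diff_le:
  fixes x y :: real assumes "0 \<le> x" "x \<le> y"
  shows "exp (- x) - exp (- y) \<le> y - x"
proof -
  have "exp (- x) - exp (- y) = exp (- x) * (1 - exp (- (y - x)))"
    by (simp add: algebra_simps flip: exp_add)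
  also have "\<dots> \<le> 1 * (1 - exp (- (y - x)))"
    using assms by (intro mult_right_mono) auto
  also have "\<dots> \<le> y - x"
  proof -
    have "1 + - (y - x) \<le> exp (- (y - x))" by (rule exp_ge_add_one_self)
    thus ?thesis by (simp only: mult.left_neutral)
  qed
  finally show ?thesis .
qed

lemma exp_neg_abs_diff:
  fixes x y :: real assumes "0 \<le> x" "0 \<le> y"
  shows "\<bar>exp (- x) - exp (- y)\<bar> \<le> \<bar>x - y\<bar>"
proof (cases "x \<le> y")
  case True
  thus ?thesis using exp_neg_diff_le[OF assms(1) True] by simp
next
  case False
  thus ?thesis using exp_neg_diff_le[OF assms(2), of x] by simp
qed

lemma exp_dd:
  fixes u v :: real
  shows "\<exists>T. exp (- v) - exp (- u) = - T * (v - u) \<and> \<bar>T - exp (- u)\<bar> \<le> \<bar>exp (- v) - exp (- u)\<bar> \<and> T > 0"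
proof (cases rule: linorder_cases[of u v])
  case equal thus ?thesis by (intro exI[of _ "exp (- u)"]) simp
next
  case less
  have d: "((\<lambda>t. exp (- t)) has_real_derivative - exp (- t)) (at t)" for t
    by (auto intro!: derivative_eq_intros)
  obtain \<xi> where \<xi>: "u < \<xi>" "\<xi> < v" "exp (- v) - exp (- u) = (v - u) * (- exp (- \<xi>))"
    using MVT2[OF less, of "\<lambda>t. exp (- t)" "\<lambda>t. - exp (- t)"] d by blast
  have "exp (- v) \<le> exp (- \<xi>)" "exp (- \<xi>) \<le> exp (- u)" using \<xi> by auto
  thus ?thesis using \<xi> by (intro exI[of _ "exp (- \<xi>)"]) (auto simp: algebra_simps)
next
  case greater
  have d: "((\<lambda>t. exp (- t)) has_real_derivative - exp (- t)) (at t)" for t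
    by (auto intro!: derivative_eq_intros)
  obtain \<xi> where \<xi>: "v < \<xi>" "\<xi> < u" "exp (- u) - exp (- v) = (u - v) * (- exp (- \<xi>))"
    using MVT2[OF greater, of "\<lambda>t. exp (- t)" "\<lambda>t. - exp (- t)"] d by blast
  have "exp (- u) \<le> exp (- \<xi>)" "exp (- \<xi>) \<le> exp (- v)" using \<xi> by auto
  thus ?thesis using \<xi> by (intro exI[of _ "exp (- \<xi>)"]) (auto simp: algebra_simps)
qed

lemma dq_alg:
  fixes D \<Delta> A1 A2 c' h :: real
  assumes dne: "\<Delta> \<noteq> 0" and A1: "A1 \<ge> 0" and A2: "A2 \<ge> 0" and h: "h \<ge> 0"
    and i1: "D * (1 + A1 * h) + A1 * c' * \<Delta> \<le> 0"
    and i2: "0 \<le> D * (1 + A2 * h) + A2 * c' * \<Delta>"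
  shows "\<bar>D / \<Delta> - R\<bar> \<le> \<bar>- (A1 * c') / (1 + A1 * h) - R\<bar> + \<bar>- (A2 * c') / (1 + A2 * h) - R\<bar>"
proof -
  define r1 where "r1 = - (A1 * c') / (1 + A1 * h)"
  define r2 where "r2 = - (A2 * c') / (1 + A2 * h)"
  have p1: "1 + A1 * h > 0" using A1 h by (simp add: add_pos_nonneg)
  have p2: "1 + A2 * h > 0" using A2 h by (simp add: add_pos_nonneg)
  have d1: "D \<le> r1 * \<Delta>"
  proof -
    have "D * (1 + A1 * h) \<le> - (A1 * c') * \<Delta>" using i1 by simp
    hence "D * (1 + A1 * h) / (1 + A1 * h) \<le> - (A1 * c') * \<Delta> / (1 + A1 * h)"
      using p1 by (intro divide_right_mono) auto
    hence "D \<le> - (A1 * c') * \<Delta> / (1 + A1 * h)" using p1 by simp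
    thus ?thesis unfolding r1_def by simp
  qed
  have d2: "r2 * \<Delta> \<le> D"
  proof -
    have "- (A2 * c') * \<Delta> \<le> D * (1 + A2 * h)" using i2 by simp
    hence "- (A2 * c') * \<Delta> / (1 + A2 * h) \<le> D * (1 + A2 * h) / (1 + A2 * h)"
      using p2 by (intro divide_right_mono) auto
    hence "- (A2 * c') * \<Delta> / (1 + A2 * h) \<le> D" using p2 by simp
    thus ?thesis unfolding r2_def by simp
  qed
  have "(r2 \<le> D / \<Delta> \<and> D / \<Delta> \<le> r1) \<or> (r1 \<le> D / \<Delta> \<and> D / \<Delta> \<le> r2)"
  proof (cases "\<Delta> > 0")
    case True
    thus ?thesis using d1 d2 by (simp add: le_divide_eq divide_le_eq)
  next
    case False
    hence "\<Delta> < 0" using dne by simp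
    thus ?thesis using d1 d2 by (simp add: le_divide_eq divide_le_eq)
  qed
  hence "\<bar>D / \<Delta> - R\<bar> \<le> \<bar>r1 - R\<bar> + \<bar>r2 - R\<bar>" by linarith
  thus ?thesis unfolding r1_def r2_def .
qed

lemma mvt_abs:
  fixes f f' :: "real \<Rightarrow> real"
  assumes d: "\<And>y. (f has_real_derivative f' y) (at y)"
  shows "\<exists>\<eta>. f b - f a = (b - a) * f' \<eta> \<and> \<bar>\<eta> - a\<bar> \<le> \<bar>b - a\<bar>"
proof (cases rule: linorder_cases[of a b])
  case less
  obtain \<eta> where "a < \<eta>" "\<eta> < b" "f b - f a = (b - a) * f' \<eta>" using MVT2[OF less, of f f'] d by blast
  thus ?thesis by (intro exI[of _ \<eta>]) auto
next
  case equal thus ?thesis by (intro exI[of _ a]) simp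
next
  case greater
  obtain \<eta> where "b < \<eta>" "\<eta> < a" "f a - f b = (a - b) * f' \<eta>" using MVT2[OF greater, of f f'] d by blast
  thus ?thesis by (intro exI[of _ \<eta>]) (auto simp: algebra_simps)
qed

datatype ex = Vl | Vc | Vh | Cst real | Add ex ex | Mul ex ex | Neg ex | Ex ex | LL nat ex | Inv ex

primrec evx :: "(nat \<Rightarrow> real \<Rightarrow> real) \<Rightarrow> real \<Rightarrow> real \<Rightarrow> real \<Rightarrow> ex \<Rightarrow> real" where
  "evx Lf l c h Vl = l"
| "evx Lf l c h Vc = c"
| "evx Lf l c h Vh = h"
| "evx Lf l c h (Cst r) = r"
| "evx Lf l c h (Add a b) = evx Lf l c h a + evx Lf l c h b"
| "evx Lf l c h (Mul a b) = evx Lf l c h a * evx Lf l c h b"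
| "evx Lf l c h (Neg a) = - evx Lf l c h a"
| "evx Lf l c h (Ex a) = exp (evx Lf l c h a)"
| "evx Lf l c h (LL k a) = Lf k (evx Lf l c h a)"
| "evx Lf l c h (Inv a) = inverse (evx Lf l c h a)"

primrec dx :: "ex \<Rightarrow> ex \<Rightarrow> ex \<Rightarrow> ex" where
  "dx Sl Sc Vl = Sl"
| "dx Sl Sc Vc = Sc"
| "dx Sl Sc Vh = Cst 1"
| "dx Sl Sc (Cst r) = Cst 0"
| "dx Sl Sc (Add a b) = Add (dx Sl Sc a) (dx Sl Sc b)"
| "dx Sl Sc (Mul a b) = Add (Mul (dx Sl Sc a) b) (Mul a (dx Sl Sc b))"
| "dx Sl Sc (Neg a) = Neg (dx Sl Sc a)"
| "dx Sl Sc (Ex a) = Mul (Ex a) (dx Sl Sc a)"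
| "dx Sl Sc (LL k a) = Mul (LL (Suc k) a) (dx Sl Sc a)"
| "dx Sl Sc (Inv a) = Neg (Mul (Mul (Inv a) (Inv a)) (dx Sl Sc a))"

primrec invs :: "ex \<Rightarrow> ex set" where
  "invs Vl = {}"
| "invs Vc = {}"
| "invs Vh = {}"
| "invs (Cst r) = {}"
| "invs (Add a b) = invs a \<union> invs b"
| "invs (Mul a b) = invs a \<union> invs b"
| "invs (Neg a) = invs a"
| "invs (Ex a) = invs a"
| "invs (LL k a) = invs a"
| "invs (Inv a) = insert a (invs a)"

lemma invs_dx: "invs (dx Sl Sc e) \<subseteq> invs e \<union> invs Sl \<union> invs Sc"
  by (induction e) auto

lemma invs_dxn: "invs ((dx Sl Sc ^^ n) e) \<subseteq> invs e \<union> invs Sl \<union> invs Sc"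
proof (induction n)
  case (Suc n)
  have "invs ((dx Sl Sc ^^ Suc n) e) \<subseteq> invs ((dx Sl Sc ^^ n) e) \<union> invs Sl \<union> invs Sc"
    using invs_dx[of Sl Sc "(dx Sl Sc ^^ n) e"] by simp
  thus ?case using Suc by blast
qed auto

lemma evx_deriv:
  fixes Lf :: "nat \<Rightarrow> real \<Rightarrow> real" and lf cf :: "real \<Rightarrow> real"
  assumes Lder: "\<And>k x. (Lf k has_real_derivative Lf (Suc k) x) (at x)"
    and dl: "(lf has_real_derivative evx Lf (lf h) (cf h) h Sl) (at h within S)"
    and dc: "(cf has_real_derivative evx Lf (lf h) (cf h) h Sc) (at h within S)"
  shows "(\<forall>a\<in>invs e. evx Lf (lf h) (cf h) h a \<noteq> 0) \<Longrightarrow>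
    ((\<lambda>y. evx Lf (lf y) (cf y) y e) has_real_derivative evx Lf (lf h) (cf h) h (dx Sl Sc e)) (at h within S)"
proof (induction e)
  case Vl thus ?case using dl by simp
next
  case Vc thus ?case using dc by simp
next
  case Vh thus ?case by (simp add: DERIV_ident)
next
  case (Cst r) thus ?case by simp
next
  case (Add a b) thus ?case by (auto intro!: derivative_eq_intros)
next
  case (Mul a b) thus ?case by (auto intro!: derivative_eq_intros simp: mult.commute)
next
  case (Neg a) thus ?case by (auto intro!: derivative_eq_intros)
next
  case (Ex a) thus ?case by (auto intro!: derivative_eq_intros simp: mult.commute)
next
  case (LL k a)
  hence "((\<lambda>y. evx Lf (lf y) (cf y) y a) has_real_derivative evx Lf (lf h) (cf h) h (dx Sl Sc a)) (at h within S)"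
    by simp
  from DERIV_chain2[OF Lder this] show ?case by simp
next
  case (Inv a)
  hence nz: "evx Lf (lf h) (cf h) h a \<noteq> 0" by simp
  from Inv have "((\<lambda>y. evx Lf (lf y) (cf y) y a) has_real_derivative evx Lf (lf h) (cf h) h (dx Sl Sc a)) (at h within S)"
    by simp
  from DERIV_inverse_fun[OF this nz] show ?case by (simp add: power2_eq_square mult_ac)
qed

locale kern =
  fixes K :: "real \<Rightarrow> real" and p :: real
  assumes K_meas: "K \<in> borel_measurable lborel"
    and K_nonneg: "\<And>s. K s \<ge> 0"
    and K_sym: "\<And>s. K s = K (- s)"
    and K_int: "integrable lborel K" and K_one: "(LINT s|lborel. K s) = 1"
    and K_exp: "\<And>l. integrable lborel (\<lambda>s. K s * exp (l * s))"
    and p_gt: "p > 1"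
    and standing_unique: "\<And>h. h \<ge> 0 \<Longrightarrow> \<exists>!(z, \<epsilon>). z > 0 \<and> \<epsilon> > 0 \<and> psi K p h z \<epsilon> = 0
                 \<and> deriv (\<lambda>y. psi K p h y \<epsilon>) z = 0"
    and standing_pos: "\<And>h \<epsilon> z. h \<ge> 0 \<Longrightarrow> \<epsilon> > eps0 K p h \<Longrightarrow> z > 0 \<Longrightarrow> psi K p h z \<epsilon> > 0"
begin

lemma integ_pow: "integrable lborel (\<lambda>s. s ^ k * K s * exp (b * s))"
proof (rule Bochner_Integration.integrable_bound)
  show "integrable lborel (\<lambda>s. fact k * (K s * exp ((b + 1) * s)) + fact k * (K s * exp ((b - 1) * s)))"
    using K_exp by auto
  show "(\<lambda>s. s ^ k * K s * exp (b * s)) \<in> borel_measurable lborel"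
    using K_meas by measurable
  show "AE x in lborel. norm (x ^ k * K x * exp (b * x))
       \<le> norm (fact k * (K x * exp ((b + 1) * x)) + fact k * (K x * exp ((b - 1) * x)))"
  proof (rule AE_I2)
    fix x
    have K0: "K x \<ge> 0" by (rule K_nonneg)
    have "norm (x ^ k * K x * exp (b * x)) = \<bar>x\<bar> ^ k * (K x * exp (b * x))"
      using K0 by (simp add: abs_mult power_abs)
    also have "\<dots> \<le> fact k * (exp x + exp (- x)) * (K x * exp (b * x))"
      by (rule mult_right_mono[OF abs_pow_le_exp]) (use K0 in simp)
    also have "\<dots> = fact k * (K x * exp ((b + 1) * x)) + fact k * (K x * exp ((b - 1) * x))"
    proof -
      have "exp x * exp (b * x) = exp ((b + 1) * x)"
        by (metis mult_exp_exp add.commute distrib_right mult_1)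
      moreover have "exp (- x) * exp (b * x) = exp ((b - 1) * x)"
        by (metis mult_exp_exp left_diff_distrib mult_1 uminus_add_conv_diff add.commute)
      ultimately show ?thesis by (simp only: distrib_left distrib_right mult.assoc mult.left_commute)
    qed
    also have "\<dots> = norm (fact k * (K x * exp ((b + 1) * x)) + fact k * (K x * exp ((b - 1) * x)))"
    proof -
      have "0 \<le> fact k * (K x * exp ((b + 1) * x)) + fact k * (K x * exp ((b - 1) * x))"
        using K0 by simp
      thus ?thesis by simp
    qed
    finally show "norm (x ^ k * K x * exp (b * x))
       \<le> norm (fact k * (K x * exp ((b + 1) * x)) + fact k * (K x * exp ((b - 1) * x)))" .
  qed
qed

definition L :: "nat \<Rightarrow> real \<Rightarrow> real" where
  "L k b = (LINT s|lborel. (- s) ^ k * K s * exp (- b * s))"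

lemma integ_L: "integrable lborel (\<lambda>s. (- s) ^ k * K s * exp (- b * s))"
proof -
  have "integrable lborel (\<lambda>s. s ^ k * K s * exp ((- b) * s))" by (rule integ_pow)
  hence "integrable lborel (\<lambda>s. (-1) ^ k * (s ^ k * K s * exp ((- b) * s)))"
    by (rule integrable_mult_right)
  moreover have "(\<lambda>s. (-1) ^ k * (s ^ k * K s * exp ((- b) * s))) = (\<lambda>s. (- s) ^ k * K s * exp (- b * s))"
  proof (rule ext)
    fix s :: real
    have "(- s) ^ k = (-1) ^ k * s ^ k" by (rule power_minus)
    thus "(-1) ^ k * (s ^ k * K s * exp ((- b) * s)) = (- s) ^ k * K s * exp (- b * s)"
      by (simp only: mult.assoc minus_mult_left)
  qed
  ultimately show ?thesis by (simp only:)
qed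

lemma integ_L': "integrable lborel (\<lambda>s. (- s) ^ k * K s * exp (- (b * s)))"
  using integ_L[of k b] by simp

lemma integ_Kexp': "integrable lborel (\<lambda>s. c * (K s * exp (l * s)))"
  using K_exp by (rule integrable_mult_right)

lemma L_taylor_pointwise:
  fixes s t b :: real assumes t: "\<bar>t\<bar> \<le> 1"
  shows "\<bar>(- s) ^ k * K s * exp (- (b + t) * s) - (- s) ^ k * K s * exp (- b * s)
           - t * ((- s) ^ Suc k * K s * exp (- b * s))\<bar>
         \<le> t\<^sup>2 * (fact (k + 2) * (K s * exp ((2 - b) * s) + 2 * (K s * exp ((- b) * s))
                                  + K s * exp ((- 2 - b) * s)))"
proof -
  have K0: "0 \<le> K s" by (rule K_nonneg)
  have e1: "exp (- (b + t) * s) = exp (- b * s) * exp (- t * s)"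
    by (simp flip: exp_add add: algebra_simps)
  have eq: "(- s) ^ k * K s * exp (- (b + t) * s) - (- s) ^ k * K s * exp (- b * s)
           - t * ((- s) ^ Suc k * K s * exp (- b * s))
         = ((- s) ^ k * K s * exp (- b * s)) * (exp (- t * s) - 1 - (- t * s))"
    unfolding e1 by (simp add: algebra_simps)
  have b1: "\<bar>exp (- t * s) - 1 - (- t * s)\<bar> \<le> (- t * s)\<^sup>2 * exp \<bar>- t * s\<bar>"
    by (rule exp_taylor2_bound)
  have b2: "(- t * s)\<^sup>2 * exp \<bar>- t * s\<bar> \<le> t\<^sup>2 * (s\<^sup>2 * exp \<bar>s\<bar>)"
  proof -
    have "\<bar>- t * s\<bar> \<le> \<bar>s\<bar>" using t by (simp add: abs_mult mult_left_le_one_le)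
    hence "exp \<bar>- t * s\<bar> \<le> exp \<bar>s\<bar>" by simp
    hence "t\<^sup>2 * s\<^sup>2 * exp \<bar>- t * s\<bar> \<le> t\<^sup>2 * s\<^sup>2 * exp \<bar>s\<bar>"
      by (rule mult_left_mono) simp
    thus ?thesis by (simp add: power_mult_distrib mult.assoc)
  qed
  have b3: "\<bar>s\<bar> ^ k * (s\<^sup>2 * exp \<bar>s\<bar>) \<le> fact (k + 2) * (exp (2 * s) + 2 + exp (- 2 * s))"
  proof -
    have "\<bar>s\<bar> ^ k * (s\<^sup>2 * exp \<bar>s\<bar>) = \<bar>s\<bar> ^ (k + 2) * exp \<bar>s\<bar>"
      by (simp add: power_add power2_abs power2_eq_square)
    also have "\<dots> \<le> (fact (k + 2) * (exp s + exp (- s))) * (exp s + exp (- s))"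
    proof (rule mult_mono)
      show "\<bar>s\<bar> ^ (k + 2) \<le> fact (k + 2) * (exp s + exp (- s))" by (rule abs_pow_le_exp)
      show "exp \<bar>s\<bar> \<le> exp s + exp (- s)" by (cases "s \<ge> 0") auto
    qed auto
    also have "\<dots> = fact (k + 2) * (exp (2 * s) + 2 + exp (- 2 * s))"
    proof -
      have "(exp s + exp (- s)) * (exp s + exp (- s)) = exp (2 * s) + 2 + exp (- 2 * s)"
        by (simp add: algebra_simps flip: exp_add)
      thus ?thesis by simp
    qed
    finally show ?thesis .
  qed
  have "\<bar>(- s) ^ k * K s * exp (- b * s) * (exp (- t * s) - 1 - (- t * s))\<bar>
       = (\<bar>s\<bar> ^ k * (K s * exp (- b * s))) * \<bar>exp (- t * s) - 1 - (- t * s)\<bar>"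
    using K0 by (simp add: abs_mult power_abs)
  also have "\<dots> \<le> (\<bar>s\<bar> ^ k * (K s * exp (- b * s))) * (t\<^sup>2 * (s\<^sup>2 * exp \<bar>s\<bar>))"
    by (rule mult_left_mono[OF order.trans[OF b1 b2]]) (use K0 in simp)
  also have "\<dots> = t\<^sup>2 * (K s * exp (- b * s)) * (\<bar>s\<bar> ^ k * (s\<^sup>2 * exp \<bar>s\<bar>))"
    by (simp only: mult_ac)
  also have "\<dots> \<le> t\<^sup>2 * (K s * exp (- b * s)) * (fact (k + 2) * (exp (2 * s) + 2 + exp (- 2 * s)))"
    by (rule mult_left_mono[OF b3]) (use K0 in simp)
  also have "\<dots> = t\<^sup>2 * (fact (k + 2) * (K s * exp ((2 - b) * s) + 2 * (K s * exp ((- b) * s))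
                                  + K s * exp ((- 2 - b) * s)))"
  proof -
    have "exp (- b * s) * exp (2 * s) = exp ((2 - b) * s)" by (simp add: algebra_simps flip: exp_add)
    moreover have "exp (- b * s) * exp (- 2 * s) = exp ((- 2 - b) * s)" by (simp add: algebra_simps flip: exp_add)
    ultimately show ?thesis by (simp add: algebra_simps)
  qed
  finally show ?thesis unfolding eq .
qed

lemma L_deriv: "(L k has_real_derivative L (Suc k) b) (at b)"
proof -
  define M where "M s = fact (k + 2) * (K s * exp ((2 - b) * s) + 2 * (K s * exp ((- b) * s))
                                  + K s * exp ((- 2 - b) * s))" for s
  have i1: "integrable lborel (\<lambda>s. K s * exp ((2 - b) * s))" by (rule K_exp)
  have i2: "integrable lborel (\<lambda>s. 2 * (K s * exp ((- b) * s)))" by (rule integ_Kexp')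
  have i3: "integrable lborel (\<lambda>s. K s * exp ((- 2 - b) * s))" by (rule K_exp)
  have intM: "integrable lborel M"
    unfolding M_def
    by (rule integrable_mult_right, rule Bochner_Integration.integrable_add[OF Bochner_Integration.integrable_add[OF i1 i2] i3])
  show ?thesis
  proof (rule deriv_quad[where C = "LINT s|lborel. M s"])
    fix t :: real assume t: "\<bar>t\<bar> \<le> 1"
    have iA: "integrable lborel (\<lambda>s. (- s) ^ k * K s * exp (- (b + t) * s))" by (rule integ_L)
    have iB: "integrable lborel (\<lambda>s. (- s) ^ k * K s * exp (- b * s))" by (rule integ_L)
    have iC: "integrable lborel (\<lambda>s. (- s) ^ Suc k * K s * exp (- b * s))" by (rule integ_L)
    have eqL: "L k (b + t) - L k b - t * L (Suc k) b
       = (LINT s|lborel. (- s) ^ k * K s * exp (- (b + t) * s) - (- s) ^ k * K s * exp (- b * s)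
           - t * ((- s) ^ Suc k * K s * exp (- b * s)))"
    proof -
      have iA: "integrable lborel (\<lambda>s. (- s) ^ k * K s * exp (- (b + t) * s))" by (rule integ_L)
      have iB: "integrable lborel (\<lambda>s. (- s) ^ k * K s * exp (- b * s))" by (rule integ_L)
      have iC: "integrable lborel (\<lambda>s. (- s) ^ Suc k * K s * exp (- b * s))" by (rule integ_L)
      have e1: "(LINT s|lborel. (- s) ^ k * K s * exp (- (b + t) * s) - (- s) ^ k * K s * exp (- b * s)
           - t * ((- s) ^ Suc k * K s * exp (- b * s)))
        = (LINT s|lborel. (- s) ^ k * K s * exp (- (b + t) * s) - (- s) ^ k * K s * exp (- b * s))
          - (LINT s|lborel. t * ((- s) ^ Suc k * K s * exp (- b * s)))"
        by (rule Bochner_Integration.integral_diff[OF Bochner_Integration.integrable_diff[OF iA iB] integrable_mult_right[OF iC]])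
      have e2: "(LINT s|lborel. (- s) ^ k * K s * exp (- (b + t) * s) - (- s) ^ k * K s * exp (- b * s))
          = (LINT s|lborel. (- s) ^ k * K s * exp (- (b + t) * s)) - (LINT s|lborel. (- s) ^ k * K s * exp (- b * s))"
        by (rule Bochner_Integration.integral_diff[OF iA iB])
      have e3: "(LINT s|lborel. t * ((- s) ^ Suc k * K s * exp (- b * s)))
          = t * (LINT s|lborel. (- s) ^ Suc k * K s * exp (- b * s))"
        by (rule integral_mult_right_zero)
      show ?thesis unfolding L_def e1 e2 e3 ..
    qed
    have bd: "\<bar>(LINT s|lborel. (- s) ^ k * K s * exp (- (b + t) * s) - (- s) ^ k * K s * exp (- b * s)
           - t * ((- s) ^ Suc k * K s * exp (- b * s)))\<bar> \<le> (LINT s|lborel. t\<^sup>2 * M s)"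
      unfolding real_norm_def[symmetric]
    proof (rule Bochner_Integration.integral_norm_bound_integral)
      show "integrable lborel (\<lambda>s. (- s) ^ k * K s * exp (- (b + t) * s) - (- s) ^ k * K s * exp (- b * s)
           - t * ((- s) ^ Suc k * K s * exp (- b * s)))"
        by (rule Bochner_Integration.integrable_diff[OF Bochner_Integration.integrable_diff[OF iA iB] integrable_mult_right[OF iC]])
      show "integrable lborel (\<lambda>s. t\<^sup>2 * M s)" using intM by (rule integrable_mult_right)
      fix s
      show "norm ((- s) ^ k * K s * exp (- (b + t) * s) - (- s) ^ k * K s * exp (- b * s)
           - t * ((- s) ^ Suc k * K s * exp (- b * s))) \<le> t\<^sup>2 * M s"
        unfolding real_norm_def M_def by (rule L_taylor_pointwise[OF t])
    qed
    have e4: "(LINT s|lborel. t\<^sup>2 * M s) = (LINT s|lborel. M s) * t\<^sup>2"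
      by (subst integral_mult_right_zero) (rule mult.commute)
    show "\<bar>L k (b + t) - L k b - t * L (Suc k) b\<bar> \<le> (LINT s|lborel. M s) * t\<^sup>2"
      unfolding eqL using bd unfolding e4 .
  qed
qed

lemma L_cont: "isCont (L k) b"
  using L_deriv by (rule DERIV_isCont)

lemma L_cont_tendsto[tendsto_intros]: "(f \<longlongrightarrow> a) F \<Longrightarrow> ((\<lambda>x. L k (f x)) \<longlongrightarrow> L k a) F"
  by (rule isCont_tendsto_compose[OF L_cont])


lemma int_reflect: fixes f :: "real \<Rightarrow> real" shows "(LINT s|lborel. f s) = (LINT s|lborel. f (- s))"
  using lborel_integral_real_affine[of "-1" f 0] by simp

lemma integrable_reflect: fixes f :: "real \<Rightarrow> real" shows "integrable lborel f \<Longrightarrow> integrable lborel (\<lambda>s. f (- s))"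
  using lborel_integrable_real_affine[of f "-1" 0] by simp

lemma K_reflect: fixes f :: "real \<Rightarrow> real" shows "(LINT s|lborel. K s * f s) = (LINT s|lborel. K s * f (- s))"
proof -
  have "(LINT s|lborel. K s * f s) = (LINT s|lborel. K (- s) * f (- s))" by (rule int_reflect)
  also have "\<dots> = (LINT s|lborel. K s * f (- s))" using K_sym by simp
  finally show ?thesis .
qed

lemma K_avg:
  fixes f :: "real \<Rightarrow> real"
  assumes "integrable lborel (\<lambda>s. K s * f s)"
  shows "(LINT s|lborel. K s * f s) = (LINT s|lborel. K s * ((f s + f (- s)) / 2))"
proof -
  have i2: "integrable lborel (\<lambda>s. K s * f (- s))"
    using integrable_reflect[OF assms] K_sym by (metis (no_types, lifting) ext)
  have "(LINT s|lborel. K s * ((f s + f (- s)) / 2))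
      = (LINT s|lborel. (K s * f s + K s * f (- s)) / 2)"
    by (simp add: algebra_simps)
  also have "\<dots> = ((LINT s|lborel. K s * f s) + (LINT s|lborel. K s * f (- s))) / 2"
    using assms i2 by simp
  also have "\<dots> = (LINT s|lborel. K s * f s)" using K_reflect[of f] by simp
  finally show ?thesis by simp
qed

lemma K_pos_int:
  assumes w0: "\<And>s. 0 \<le> w s" and wp: "\<And>s. s \<noteq> 0 \<Longrightarrow> 0 < w s"
    and int: "integrable lborel (\<lambda>s. K s * w s)"
  shows "0 < (LINT s|lborel. K s * w s)"
proof -
  have nn: "0 \<le> (LINT s|lborel. K s * w s)"
    by (rule Bochner_Integration.integral_nonneg) (use K_nonneg w0 in simp)
  moreover have "(LINT s|lborel. K s * w s) \<noteq> 0"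
  proof
    assume "(LINT s|lborel. K s * w s) = 0"
    hence "AE s in lborel. K s * w s = 0"
      using integral_nonneg_eq_0_iff_AE[OF int] K_nonneg w0 by simp
    hence "AE s in lborel. K s = 0"
      using AE_lborel_singleton[of 0]
    proof eventually_elim
      case (elim s) thus ?case using wp[of s] by auto
    qed
    hence "(LINT s|lborel. K s) = (LINT (s::real)|lborel. (0::real))" using K_meas by (intro Bochner_Integration.integral_cong_AE) auto
    thus False using K_one by simp
  qed
  ultimately show ?thesis by simp
qed

lemma integ_Kexp0: "integrable lborel (\<lambda>s. K s * exp (- (b * s)))"
  using K_exp[of "- b"] by simp

lemma L0_eq: "L 0 b = (LINT s|lborel. K s * exp (- (b * s)))"
  unfolding L_def by simp

lemma L0_cosh: "L 0 b = (LINT s|lborel. K s * cosh (b * s))"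
proof -
  have "L 0 b = (LINT s|lborel. K s * ((exp (- (b * s)) + exp (- (b * - s))) / 2))"
    unfolding L0_eq by (rule K_avg[OF integ_Kexp0])
  also have "\<dots> = (LINT s|lborel. K s * cosh (b * s))"
    by (simp add: cosh_def add.commute)
  finally show ?thesis .
qed

lemma integ_Kcosh: "integrable lborel (\<lambda>s. K s * cosh (b * s))"
proof -
  have "integrable lborel (\<lambda>s. (K s * exp (b * s) + K s * exp ((- b) * s)) / 2)"
    by (rule integrable_divide_zero, rule Bochner_Integration.integrable_add[OF K_exp K_exp])
  moreover have "(\<lambda>s. (K s * exp (b * s) + K s * exp ((- b) * s)) / 2) = (\<lambda>s. K s * cosh (b * s))"
    by (rule ext) (simp add: cosh_def algebra_simps)
  ultimately show ?thesis by (simp only:)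
qed

lemma L0_ge1: "1 \<le> L 0 b"
proof -
  have "(LINT s|lborel. K s) \<le> (LINT s|lborel. K s * cosh (b * s))"
  proof (rule integral_mono[OF K_int integ_Kcosh])
    fix s
    have "K s * 1 \<le> K s * cosh (b * s)" by (rule mult_left_mono[OF cosh_real_ge_1 K_nonneg])
    thus "K s \<le> K s * cosh (b * s)" by simp
  qed
  thus ?thesis using K_one L0_cosh by simp
qed

lemma L0_gt1: assumes "b \<noteq> 0" shows "1 < L 0 b"
proof -
  have "0 < (LINT s|lborel. K s * (cosh (b * s) - 1))"
  proof (rule K_pos_int)
    show "0 \<le> cosh (b * s) - 1" for s using cosh_real_ge_1 by simp
    show "0 < cosh (b * s) - 1" if "s \<noteq> 0" for s
    proof -
      have "cosh 0 < cosh \<bar>b * s\<bar>" using that assms by (intro cosh_real_strict_mono) auto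
      thus ?thesis by simp
    qed
    show "integrable lborel (\<lambda>s. K s * (cosh (b * s) - 1))"
      using integ_Kcosh[of b] K_int by (simp add: right_diff_distrib)
  qed
  also have "(LINT s|lborel. K s * (cosh (b * s) - 1)) = L 0 b - 1"
    using integ_Kcosh[of b] K_int K_one L0_cosh by (simp add: right_diff_distrib)
  finally show ?thesis by simp
qed

lemma L0_pos: "0 < L 0 b"
  using L0_ge1[of b] by simp

lemma L0_mono: assumes "0 \<le> b" "b \<le> b'" shows "L 0 b \<le> L 0 b'"
proof -
  have "(LINT s|lborel. K s * cosh (b * s)) \<le> (LINT s|lborel. K s * cosh (b' * s))"
  proof (rule integral_mono[OF integ_Kcosh integ_Kcosh])
    fix s
    have "cosh (b * s) = cosh \<bar>b * s\<bar>" by (cases "b * s \<ge> 0") auto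
    also have "\<dots> \<le> cosh \<bar>b' * s\<bar>"
      using assms by (subst cosh_real_nonneg_le_iff) (auto simp: abs_mult intro!: mult_right_mono)
    also have "\<dots> = cosh (b' * s)" by (cases "b' * s \<ge> 0") auto
    finally show "K s * cosh (b * s) \<le> K s * cosh (b' * s)"
      using K_nonneg by (simp add: mult_left_mono)
  qed
  thus ?thesis unfolding L0_cosh .
qed


lemma int_diff_scaled:
  fixes f g :: "real \<Rightarrow> real"
  assumes "integrable lborel f" "integrable lborel g"
  shows "(LINT s|lborel. f s) - c * (LINT s|lborel. g s) = (LINT s|lborel. f s - c * g s)"
proof -
  have "(LINT s|lborel. f s - c * g s) = (LINT s|lborel. f s) - (LINT s|lborel. c * g s)"
    by (rule Bochner_Integration.integral_diff[OF assms(1) integrable_mult_right[OF assms(2)]])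
  thus ?thesis by simp
qed

lemma integ_Ks: "integrable lborel (\<lambda>s. K s * (s * exp (b * s)))"
  using integ_pow[of 1 b] by (simp add: mult_ac)

lemma integ_Ks2: "integrable lborel (\<lambda>s. s\<^sup>2 * K s)"
  using integ_pow[of 2 0] by simp

lemma L1_nonneg: assumes b: "0 \<le> b" shows "0 \<le> L 1 b"
proof -
  have i: "integrable lborel (\<lambda>s. K s * (- s * exp (- (b * s))))"
    using integrable_mult_right[OF integ_Ks[of "- b"], of "-1"] by simp
  have "L 1 b = (LINT s|lborel. K s * (- s * exp (- (b * s))))"
    unfolding L_def by (simp add: mult_ac)
  also have "\<dots> = (LINT s|lborel. K s * ((- s * exp (- (b * s)) + - (- s) * exp (- (b * - s))) / 2))"
    by (rule K_avg[OF i])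
  also have "\<dots> = (LINT s|lborel. K s * (s * sinh (b * s)))"
    by (rule Bochner_Integration.integral_cong) (simp_all add: sinh_def field_simps)
  also have "\<dots> \<ge> 0"
  proof (rule Bochner_Integration.integral_nonneg)
    fix s :: real
    have "0 \<le> s * sinh (b * s)"
    proof (cases "s \<ge> 0")
      case True thus ?thesis using b by (simp add: sinh_real_nonneg_iff)
    next
      case False
      hence "sinh (b * s) \<le> 0" using b sinh_real_nonneg_iff[of "- (b * s)"] by (simp add: mult_nonneg_nonpos)
      thus ?thesis using False by (simp add: mult_nonpos_nonpos)
    qed
    thus "0 \<le> K s * (s * sinh (b * s))" using K_nonneg by simp
  qed
  finally show ?thesis .
qed

definition sig2 :: real where "sig2 = (LINT s|lborel. s\<^sup>2 * K s)"

lemma sig2_nonneg: "0 \<le> sig2"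
  unfolding sig2_def by (rule Bochner_Integration.integral_nonneg) (use K_nonneg in simp)

lemma k1_ineq: assumes a: "a \<noteq> 0" shows "L 0 a - a * L 1 a < 1 - a\<^sup>2 / 2 * sig2"
proof -
  define f where "f s = exp (- (a * s)) * (1 + a * s)" for s
  have iL0: "integrable lborel (\<lambda>s. (- s) ^ 0 * K s * exp (- a * s))" by (rule integ_L)
  have iL1: "integrable lborel (\<lambda>s. (- s) ^ 1 * K s * exp (- a * s))" by (rule integ_L)
  have e1: "L 0 a - a * L 1 a = (LINT s|lborel. (- s) ^ 0 * K s * exp (- a * s) - a * ((- s) ^ 1 * K s * exp (- a * s)))"
    unfolding L_def by (rule int_diff_scaled[OF iL0 iL1])
  have iKf: "integrable lborel (\<lambda>s. K s * f s)"
  proof -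
    have "integrable lborel (\<lambda>s. (- s) ^ 0 * K s * exp (- a * s) - a * ((- s) ^ 1 * K s * exp (- a * s)))"
      by (rule Bochner_Integration.integrable_diff[OF iL0 integrable_mult_right[OF iL1]])
    moreover have "(\<lambda>s. (- s) ^ 0 * K s * exp (- a * s) - a * ((- s) ^ 1 * K s * exp (- a * s))) = (\<lambda>s. K s * f s)"
      by (rule ext) (simp add: f_def algebra_simps)
    ultimately show ?thesis by (simp only:)
  qed
  have e2: "L 0 a - a * L 1 a = (LINT s|lborel. K s * f s)"
    unfolding e1 by (rule Bochner_Integration.integral_cong) (simp_all add: f_def algebra_simps)
  also have "\<dots> = (LINT s|lborel. K s * ((f s + f (- s)) / 2))" by (rule K_avg[OF iKf])
  also have "\<dots> = (LINT s|lborel. K s * (cosh (a * s) - (a * s) * sinh (a * s)))"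
    by (rule Bochner_Integration.integral_cong) (simp_all add: f_def cosh_def sinh_def field_simps)
  finally have e3: "L 0 a - a * L 1 a = (LINT s|lborel. K s * (cosh (a * s) - (a * s) * sinh (a * s)))" .
  have iC: "integrable lborel (\<lambda>s. K s * (cosh (a * s) - (a * s) * sinh (a * s)))"
  proof -
    have "integrable lborel (\<lambda>s. K s * ((f s + f (- s)) / 2))"
      using iKf integrable_reflect[OF iKf] K_sym
      by (simp add: algebra_simps add_divide_distrib)
    moreover have "(\<lambda>s. K s * ((f s + f (- s)) / 2)) = (\<lambda>s. K s * (cosh (a * s) - (a * s) * sinh (a * s)))"
      by (rule ext) (simp add: f_def cosh_def sinh_def field_simps)
    ultimately show ?thesis by (simp only:)
  qed
  have e4: "1 - a\<^sup>2 / 2 * sig2 = (LINT s|lborel. K s * (1 - (a * s)\<^sup>2 / 2))"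
  proof -
    have "1 - a\<^sup>2 / 2 * sig2 = (LINT s|lborel. K s) - a\<^sup>2 / 2 * (LINT s|lborel. s\<^sup>2 * K s)"
      using K_one sig2_def by simp
    also have "\<dots> = (LINT s|lborel. K s - a\<^sup>2 / 2 * (s\<^sup>2 * K s))"
      by (rule int_diff_scaled[OF K_int integ_Ks2])
    also have "\<dots> = (LINT s|lborel. K s * (1 - (a * s)\<^sup>2 / 2))"
      by (rule Bochner_Integration.integral_cong) (simp_all add: algebra_simps power_mult_distrib)
    finally show ?thesis .
  qed
  have iP: "integrable lborel (\<lambda>s. K s * (1 - (a * s)\<^sup>2 / 2))"
  proof -
    have "integrable lborel (\<lambda>s. K s - a\<^sup>2 / 2 * (s\<^sup>2 * K s))"
      by (rule Bochner_Integration.integrable_diff[OF K_int integrable_mult_right[OF integ_Ks2]])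
    moreover have "(\<lambda>s. K s - a\<^sup>2 / 2 * (s\<^sup>2 * K s)) = (\<lambda>s. K s * (1 - (a * s)\<^sup>2 / 2))"
      by (rule ext) (simp add: algebra_simps power_mult_distrib)
    ultimately show ?thesis by (simp only:)
  qed
  have "0 < (LINT s|lborel. K s * (1 - (a * s)\<^sup>2 / 2 - cosh (a * s) + (a * s) * sinh (a * s)))"
  proof (rule K_pos_int)
    show "0 < 1 - (a * s)\<^sup>2 / 2 - cosh (a * s) + a * s * sinh (a * s)" if "s \<noteq> 0" for s
      using psi_aux_pos[of "a * s"] that a by simp
    show "0 \<le> 1 - (a * s)\<^sup>2 / 2 - cosh (a * s) + a * s * sinh (a * s)" for s
      using psi_aux_pos[of "a * s"] by (cases "a * s = 0") auto
    have "integrable lborel (\<lambda>s. K s * (1 - (a * s)\<^sup>2 / 2) - K s * (cosh (a * s) - (a * s) * sinh (a * s)))"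
      by (rule Bochner_Integration.integrable_diff[OF iP iC])
    thus "integrable lborel (\<lambda>s. K s * (1 - (a * s)\<^sup>2 / 2 - cosh (a * s) + a * s * sinh (a * s)))"
      by (simp add: algebra_simps)
  qed
  also have "(LINT s|lborel. K s * (1 - (a * s)\<^sup>2 / 2 - cosh (a * s) + (a * s) * sinh (a * s)))
      = (LINT s|lborel. K s * (1 - (a * s)\<^sup>2 / 2)) - (LINT s|lborel. K s * (cosh (a * s) - (a * s) * sinh (a * s)))"
  proof -
    have "(LINT s|lborel. K s * (1 - (a * s)\<^sup>2 / 2) - K s * (cosh (a * s) - (a * s) * sinh (a * s)))
      = (LINT s|lborel. K s * (1 - (a * s)\<^sup>2 / 2)) - (LINT s|lborel. K s * (cosh (a * s) - (a * s) * sinh (a * s)))"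
      by (rule Bochner_Integration.integral_diff[OF iP iC])
    moreover have "(\<lambda>s. K s * (1 - (a * s)\<^sup>2 / 2) - K s * (cosh (a * s) - (a * s) * sinh (a * s)))
       = (\<lambda>s. K s * (1 - (a * s)\<^sup>2 / 2 - cosh (a * s) + (a * s) * sinh (a * s)))"
      by (rule ext) (simp add: algebra_simps)
    ultimately show ?thesis by simp
  qed
  finally show ?thesis unfolding e3 e4 by simp
qed

lemma G2_nonneg: "0 \<le> L 2 l - 2 * u * L 1 l + u\<^sup>2 * L 0 l"
proof -
  have i0: "integrable lborel (\<lambda>s. (- s) ^ 0 * K s * exp (- l * s))" by (rule integ_L)
  have i1: "integrable lborel (\<lambda>s. (- s) ^ 1 * K s * exp (- l * s))" by (rule integ_L)
  have i2: "integrable lborel (\<lambda>s. (- s) ^ 2 * K s * exp (- l * s))" by (rule integ_L)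
  have "L 2 l - 2 * u * L 1 l + u\<^sup>2 * L 0 l
     = (LINT s|lborel. (- s) ^ 2 * K s * exp (- l * s) - 2 * u * ((- s) ^ 1 * K s * exp (- l * s))
          + u\<^sup>2 * ((- s) ^ 0 * K s * exp (- l * s)))"
  proof -
    have "(LINT s|lborel. (- s) ^ 2 * K s * exp (- l * s) - 2 * u * ((- s) ^ 1 * K s * exp (- l * s))
          + u\<^sup>2 * ((- s) ^ 0 * K s * exp (- l * s)))
       = (LINT s|lborel. (- s) ^ 2 * K s * exp (- l * s) - 2 * u * ((- s) ^ 1 * K s * exp (- l * s)))
          + (LINT s|lborel. u\<^sup>2 * ((- s) ^ 0 * K s * exp (- l * s)))"
      by (rule Bochner_Integration.integral_add[OF Bochner_Integration.integrable_diff[OF i2 integrable_mult_right[OF i1]] integrable_mult_right[OF i0]])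
    also have "(LINT s|lborel. (- s) ^ 2 * K s * exp (- l * s) - 2 * u * ((- s) ^ 1 * K s * exp (- l * s)))
       = L 2 l - 2 * u * L 1 l"
      unfolding L_def by (rule int_diff_scaled[OF i2 i1, symmetric])
    also have "(LINT s|lborel. u\<^sup>2 * ((- s) ^ 0 * K s * exp (- l * s))) = u\<^sup>2 * L 0 l"
      unfolding L_def by (rule integral_mult_right_zero)
    finally show ?thesis by simp
  qed
  also have "\<dots> \<ge> 0"
  proof (rule Bochner_Integration.integral_nonneg)
    fix s
    have "(- s) ^ 2 * K s * exp (- l * s) - 2 * u * ((- s) ^ 1 * K s * exp (- l * s))
          + u\<^sup>2 * ((- s) ^ 0 * K s * exp (- l * s)) = (K s * exp (- l * s)) * (s + u)\<^sup>2"
      by (simp add: algebra_simps power2_eq_square)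
    also have "\<dots> \<ge> 0" using K_nonneg by simp
    finally show "0 \<le> (- s) ^ 2 * K s * exp (- l * s) - 2 * u * ((- s) ^ 1 * K s * exp (- l * s))
          + u\<^sup>2 * ((- s) ^ 0 * K s * exp (- l * s))" .
  qed
  finally show ?thesis .
qed


lemma L_deriv_chain [derivative_intros]:
  "(f has_real_derivative f') (at x within S) \<Longrightarrow>
   ((\<lambda>x. L k (f x)) has_real_derivative L (Suc k) (f x) * f') (at x within S)"
  by (rule DERIV_chain2[OF L_deriv])

definition G :: "real \<Rightarrow> real \<Rightarrow> real \<Rightarrow> real" where
  "G h c l = l\<^sup>2 - c * l - 1 + p * exp (- l * c * h) * L 0 l"

definition G1 :: "real \<Rightarrow> real \<Rightarrow> real \<Rightarrow> real" where
  "G1 h c l = 2 * l - c + p * exp (- l * c * h) * (L 1 l - c * h * L 0 l)"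

lemma psi_eq: "psi K p h z \<epsilon> = \<epsilon> * z\<^sup>2 - z - 1 + p * exp (- z * h) * L 0 (sqrt \<epsilon> * z)"
  unfolding psi_def L_def by (simp add: mult_ac)

lemma psi_G: assumes "\<epsilon> > 0" shows "psi K p h z \<epsilon> = G h (1 / sqrt \<epsilon>) (sqrt \<epsilon> * z)"
proof -
  have s: "sqrt \<epsilon> > 0" using assms by simp
  have "(sqrt \<epsilon> * z)\<^sup>2 = \<epsilon> * z\<^sup>2" using assms by (simp add: power_mult_distrib)
  moreover have "1 / sqrt \<epsilon> * (sqrt \<epsilon> * z) = z" using s by simp
  moreover have "- (sqrt \<epsilon> * z) * (1 / sqrt \<epsilon>) * h = - z * h" using s by simp
  ultimately show ?thesis unfolding psi_eq G_def by simp
qed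

lemma psi_deriv: assumes "\<epsilon> > 0"
  shows "((\<lambda>y. psi K p h y \<epsilon>) has_real_derivative sqrt \<epsilon> * G1 h (1 / sqrt \<epsilon>) (sqrt \<epsilon> * y)) (at y)"
proof -
  have s: "sqrt \<epsilon> > 0" using assms by simp
  have d: "((\<lambda>y. \<epsilon> * y\<^sup>2 - y - 1 + p * exp (- y * h) * L 0 (sqrt \<epsilon> * y)) has_real_derivative
      \<epsilon> * (2 * y) - 1 + p * (exp (- y * h) * (- h) * L 0 (sqrt \<epsilon> * y) + exp (- y * h) * (L 1 (sqrt \<epsilon> * y) * sqrt \<epsilon>))) (at y)"
    by (auto intro!: derivative_eq_intros simp: algebra_simps)
  have e: "\<epsilon> * (2 * y) - 1 + p * (exp (- y * h) * (- h) * L 0 (sqrt \<epsilon> * y) + exp (- y * h) * (L 1 (sqrt \<epsilon> * y) * sqrt \<epsilon>))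
     = sqrt \<epsilon> * G1 h (1 / sqrt \<epsilon>) (sqrt \<epsilon> * y)"
  proof -
    have "- (sqrt \<epsilon> * y) * (1 / sqrt \<epsilon>) * h = - y * h" using s by simp
    moreover have "sqrt \<epsilon> * sqrt \<epsilon> = \<epsilon>" using assms by simp
    ultimately show ?thesis unfolding G1_def using s by (simp add: algebra_simps)
  qed
  show ?thesis using d unfolding e psi_eq[abs_def] .
qed

definition cs :: "real \<Rightarrow> real" where "cs h = cstar K p h"

definition zz :: "real \<Rightarrow> real" where
  "zz h = (SOME z. z > 0 \<and> psi K p h z (eps0 K p h) = 0 \<and> deriv (\<lambda>y. psi K p h y (eps0 K p h)) z = 0)"

definition lam :: "real \<Rightarrow> real" where "lam h = sqrt (eps0 K p h) * zz h"

lemma eps0_prop: assumes h: "h \<ge> 0"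
  shows "eps0 K p h > 0 \<and> (\<exists>z>0. psi K p h z (eps0 K p h) = 0 \<and> deriv (\<lambda>y. psi K p h y (eps0 K p h)) z = 0)"
proof -
  let ?P = "\<lambda>\<epsilon>. \<epsilon> > 0 \<and> (\<exists>z>0. psi K p h z \<epsilon> = 0 \<and> deriv (\<lambda>y. psi K p h y \<epsilon>) z = 0)"
  let ?Q = "\<lambda>z e. z > 0 \<and> e > 0 \<and> psi K p h z e = 0 \<and> deriv (\<lambda>y. psi K p h y e) z = 0"
  obtain x where x: "case x of (z, e) \<Rightarrow> ?Q z e" and unx: "\<And>y. (case y of (z, e) \<Rightarrow> ?Q z e) \<Longrightarrow> y = x"
    using standing_unique[OF h] by (elim ex1E) blast
  obtain z0 e0 where x0: "x = (z0, e0)" by (cases x)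
  have ze: "?Q z0 e0" using x unfolding x0 by simp
  have un: "(z, e) = (z0, e0)" if "?Q z e" for z e
    using unx[of "(z, e)"] that unfolding x0 by simp
  have "\<exists>!\<epsilon>. ?P \<epsilon>"
  proof (rule ex1I[of _ e0])
    show "?P e0" using ze by blast
    fix e assume "?P e"
    then obtain z where "z > 0 \<and> e > 0 \<and> psi K p h z e = 0 \<and> deriv (\<lambda>y. psi K p h y e) z = 0" by blast
    from un[OF this] show "e = e0" by simp
  qed
  from theI'[OF this] show ?thesis unfolding eps0_def .
qed

lemma eps0_pos: "h \<ge> 0 \<Longrightarrow> eps0 K p h > 0"
  using eps0_prop by blast

lemma zz_prop: assumes h: "h \<ge> 0"
  shows "zz h > 0 \<and> psi K p h (zz h) (eps0 K p h) = 0 \<and> deriv (\<lambda>y. psi K p h y (eps0 K p h)) (zz h) = 0"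
  unfolding zz_def by (rule someI_ex) (use eps0_prop[OF h] in blast)

lemma cs_eq: "cs h = 1 / sqrt (eps0 K p h)"
  unfolding cs_def cstar_def ..

lemma cs_pos: "h \<ge> 0 \<Longrightarrow> cs h > 0"
  unfolding cs_eq using eps0_pos by simp

lemma lam_pos: "h \<ge> 0 \<Longrightarrow> lam h > 0"
  unfolding lam_def using eps0_pos zz_prop by simp

lemma G_lam: assumes h: "h \<ge> 0" shows "G h (cs h) (lam h) = 0"
  using zz_prop[OF h] psi_G[OF eps0_pos[OF h]] unfolding cs_eq lam_def by simp

lemma G1_lam: assumes h: "h \<ge> 0" shows "G1 h (cs h) (lam h) = 0"
proof -
  have e: "eps0 K p h > 0" by (rule eps0_pos[OF h])
  have "deriv (\<lambda>y. psi K p h y (eps0 K p h)) (zz h)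
      = sqrt (eps0 K p h) * G1 h (1 / sqrt (eps0 K p h)) (sqrt (eps0 K p h) * zz h)"
    by (rule DERIV_imp_deriv[OF psi_deriv[OF e]])
  thus ?thesis using zz_prop[OF h] e unfolding cs_eq lam_def by simp
qed

lemma G_anti_c: assumes "h \<ge> 0" "l > 0" "c \<le> c'" shows "G h c' l \<le> G h c l"
proof -
  have "exp (- l * c' * h) \<le> exp (- l * c * h)"
    using assms by (simp add: mult_right_mono mult_left_mono)
  hence "p * exp (- l * c' * h) * L 0 l \<le> p * exp (- l * c * h) * L 0 l"
    using p_gt L0_pos[of l] by (intro mult_right_mono mult_left_mono) auto
  moreover have "c * l \<le> c' * l" using assms by (simp add: mult_right_mono)
  ultimately show ?thesis unfolding G_def by linarith
qed

lemma UBL: assumes h: "h \<ge> 0" and Y: "Y > 0" and l: "l > 0" and neg: "G h Y l < 0"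
  shows "cs h < Y"
proof -
  have "((\<lambda>c. G h c l) \<longlongrightarrow> G h Y l) (at_left Y)"
    unfolding G_def by (intro tendsto_intros)
  hence ev1: "\<forall>\<^sub>F c in at_left Y. G h c l < 0" using neg by (rule order_tendstoD(2))
  have ev2: "\<forall>\<^sub>F c in at_left Y. c \<in> {0<..<Y}" by (rule eventually_at_left_real[OF Y])
  obtain c where c: "G h c l < 0" "c \<in> {0<..<Y}"
    using eventually_happens[OF eventually_conj[OF ev1 ev2]] trivial_limit_at_left_real by blast
  hence c0: "c > 0" "c < Y" by auto
  define \<epsilon> where "\<epsilon> = 1 / c\<^sup>2"
  have e0: "\<epsilon> > 0" using c0 by (simp add: \<epsilon>_def)
  have se: "sqrt \<epsilon> = 1 / c" using c0 by (simp add: \<epsilon>_def real_sqrt_divide)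
  have "psi K p h (c * l) \<epsilon> = G h c l"
    using psi_G[OF e0, of h "c * l"] se c0 by simp
  hence "psi K p h (c * l) \<epsilon> < 0" using c by simp
  hence "\<not> eps0 K p h < \<epsilon>" using standing_pos[OF h, of \<epsilon> "c * l"] c0 l by force
  hence "\<epsilon> \<le> eps0 K p h" by simp
  hence "sqrt \<epsilon> \<le> sqrt (eps0 K p h)" by simp
  hence "1 / sqrt (eps0 K p h) \<le> 1 / sqrt \<epsilon>" using e0 by (intro divide_left_mono) auto
  hence "cs h \<le> c" unfolding cs_eq se using c0 by simp
  thus ?thesis using c0 by simp
qed

lemma LBL: assumes h: "h \<ge> 0" and pos: "\<And>l. l > 0 \<Longrightarrow> 0 < G h X l"
  shows "X < cs h"
proof (rule ccontr)
  assume "\<not> X < cs h"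
  hence "G h X (lam h) \<le> G h (cs h) (lam h)" using h lam_pos[OF h] by (intro G_anti_c) auto
  thus False using pos[OF lam_pos[OF h]] G_lam[OF h] by simp
qed

lemma G_cs_nonneg: assumes h: "h \<ge> 0" and l: "l > 0" shows "0 \<le> G h (cs h) l"
proof (rule ccontr)
  assume "\<not> 0 \<le> G h (cs h) l"
  hence "cs h < cs h" using UBL[OF h cs_pos[OF h] l] by simp
  thus False by simp
qed

lemma cs_strict_mono: assumes a: "0 \<le> a" and ab: "a < b" shows "cs b < cs a"
proof (rule UBL)
  show "0 \<le> b" using a ab by simp
  show "0 < cs a" by (rule cs_pos[OF a])
  show "0 < lam a" by (rule lam_pos[OF a])
  have "exp (- lam a * cs a * b) < exp (- lam a * cs a * a)"
    using ab lam_pos[OF a] cs_pos[OF a] by simp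
  hence "p * exp (- lam a * cs a * b) * L 0 (lam a) < p * exp (- lam a * cs a * a) * L 0 (lam a)"
    using p_gt L0_pos[of "lam a"] by simp
  hence "G b (cs a) (lam a) < G a (cs a) (lam a)" unfolding G_def by simp
  thus "G b (cs a) (lam a) < 0" using G_lam[OF a] by simp
qed


definition a0 :: real where "a0 = sqrt ((p - 1) / (1 + p / 2 * sig2))"

lemma a0_pos: "a0 > 0"
  unfolding a0_def using p_gt sig2_nonneg by (simp add: add_pos_nonneg)

lemma a0_sq: "a0\<^sup>2 * (1 + p / 2 * sig2) = p - 1"
proof -
  have d: "1 + p / 2 * sig2 > 0" using p_gt sig2_nonneg by (simp add: add_pos_nonneg)
  have "a0\<^sup>2 = (p - 1) / (1 + p / 2 * sig2)"
    unfolding a0_def using p_gt d by (simp add: real_sqrt_pow2)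
  thus ?thesis using d by simp
qed

lemma k1_eq: "k1 K p = 2 * a0 + p * L 1 a0"
proof -
  have "(LINT s|lborel. s * K s * exp (- s * a0)) = - L 1 a0"
    unfolding L_def by (simp add: mult_ac)
  thus ?thesis unfolding k1_def a0_def[symmetric] sig2_def[symmetric] Let_def by simp
qed

lemma k1_ge: "2 * a0 \<le> k1 K p"
  unfolding k1_eq using L1_nonneg[of a0] a0_pos p_gt by simp

lemma k1_pos: "k1 K p > 0"
  using k1_ge a0_pos by simp

lemma k1_key: "p * L 0 a0 < 1 + k1 K p * a0 - a0\<^sup>2"
proof -
  have "L 0 a0 - a0 * L 1 a0 < 1 - a0\<^sup>2 / 2 * sig2" using k1_ineq a0_pos by simp
  hence "p * (L 0 a0 - a0 * L 1 a0) < p * (1 - a0\<^sup>2 / 2 * sig2)" using p_gt by simp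
  moreover have "p * (1 - a0\<^sup>2 / 2 * sig2) = 1 + a0\<^sup>2"
    using a0_sq by (simp add: algebra_simps)
  moreover have "1 + k1 K p * a0 - a0\<^sup>2 = 1 + a0\<^sup>2 + p * a0 * L 1 a0"
    unfolding k1_eq by (simp add: algebra_simps power2_eq_square)
  ultimately show ?thesis by (simp add: algebra_simps)
qed

lemma UB_k1: assumes h: "0 \<le> h" "h \<le> 1" shows "cs h < k1 K p / (1 + h)"
proof (rule UBL[OF h(1) _ a0_pos])
  define Y where "Y = k1 K p / (1 + h)"
  define m where "m = a0 * Y"
  define R where "R = 1 + m * (1 + h) - a0\<^sup>2"
  have Y0: "Y > 0" unfolding Y_def using k1_pos h by simp
  show "0 < k1 K p / (1 + h)" using Y0 Y_def by simp
  have m0: "m \<ge> 0" unfolding m_def using Y0 a0_pos by simp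
  have mY: "m * (1 + h) = k1 K p * a0" unfolding m_def Y_def using h by simp
  have ma: "a0\<^sup>2 \<le> m"
  proof -
    have "a0 * (2 * a0) \<le> a0 * k1 K p" using k1_ge a0_pos by simp
    hence "2 * a0\<^sup>2 \<le> m * (1 + h)" using mY by (simp add: power2_eq_square mult_ac)
    also have "\<dots> \<le> m * 2" using h m0 by (intro mult_left_mono) auto
    finally show ?thesis by simp
  qed
  have RL: "p * L 0 a0 < R" unfolding R_def mY using k1_key by simp
  define E where "E = exp (- (m * h))"
  have E0: "E > 0" unfolding E_def by simp
  have Einv: "exp (m * h) * E = 1" unfolding E_def by (simp flip: exp_add)
  have "R * E \<le> 1 + m - a0\<^sup>2"
  proof -
    have A: "1 \<le> 1 + m - a0\<^sup>2" using ma by simp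
    have "R \<le> (1 + m - a0\<^sup>2) * (1 + m * h)"
    proof -
      have "(1 + m - a0\<^sup>2) * (1 + m * h) = (1 + m - a0\<^sup>2) + (1 + m - a0\<^sup>2) * (m * h)"
        by (simp add: algebra_simps)
      moreover have "m * h \<le> (1 + m - a0\<^sup>2) * (m * h)"
        using mult_right_mono[OF A, of "m * h"] m0 h by simp
      ultimately show ?thesis unfolding R_def by (simp add: algebra_simps)
    qed
    also have "\<dots> \<le> (1 + m - a0\<^sup>2) * exp (m * h)"
      using A by (intro mult_left_mono) (auto simp: exp_ge_add_one_self add.commute)
    finally have "R * E \<le> (1 + m - a0\<^sup>2) * exp (m * h) * E" using E0 by simp
    also have "\<dots> = 1 + m - a0\<^sup>2" using Einv by (simp add: mult.assoc)
    finally show ?thesis .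
  qed
  moreover have "p * L 0 a0 * E < R * E" using RL E0 by simp
  moreover have "G h Y a0 = a0\<^sup>2 - m - 1 + p * L 0 a0 * E"
    unfolding G_def E_def m_def by (simp add: mult_ac)
  ultimately have "G h Y a0 < 0" by simp
  thus "G h (k1 K p / (1 + h)) a0 < 0" unfolding Y_def .
qed

lemma G_gt_simple: assumes l: "l > 0" shows "l\<^sup>2 - X * l - 1 + p * exp (- l * X * h) < G h X l"
proof -
  have "p * exp (- l * X * h) * 1 < p * exp (- l * X * h) * L 0 l"
    using L0_gt1[of l] l p_gt by (intro mult_strict_left_mono) auto
  thus ?thesis unfolding G_def by simp
qed

lemma LB_log: assumes h: "h \<ge> 0" and X: "X > 0" and XB: "X * (1 + h) \<le> 2 * sqrt (ln p)"
  shows "X < cs h"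
proof (rule LBL[OF h])
  fix l :: real assume l: "l > 0"
  define r where "r = sqrt (ln p)"
  have lp: "ln p > 0" using p_gt by simp
  have r2: "r\<^sup>2 = ln p" unfolding r_def using lp by simp
  have "p * exp (- l * X * h) = exp (ln p + - (l * X * h))"
    using p_gt by (simp add: exp_diff exp_minus divide_inverse)
  also have "\<dots> \<ge> 1 + (ln p + - (l * X * h))" by (rule exp_ge_add_one_self)
  finally have e: "1 + ln p - l * X * h \<le> p * exp (- l * X * h)" by simp
  have "X * (1 + h) * l \<le> 2 * r * l" using XB l unfolding r_def by (intro mult_right_mono) auto
  hence "0 \<le> l\<^sup>2 - X * (1 + h) * l + ln p"
    using r2 by (smt (verit) zero_le_power2 power2_diff)
  hence "0 \<le> l\<^sup>2 - X * l - 1 + p * exp (- l * X * h)" using e by (simp add: algebra_simps)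
  thus "0 < G h X l" using G_gt_simple[OF l, of X h] by linarith
qed

lemma quad_nonneg:
  fixes A B C l :: real assumes A: "A > 0" and d: "B\<^sup>2 = 4 * A * C"
  shows "0 \<le> A * l\<^sup>2 - B * l + C"
proof -
  have "4 * A * (A * l\<^sup>2 - B * l + C) = (2 * A * l - B)\<^sup>2"
    using d by (simp add: power2_eq_square algebra_simps)
  hence "0 \<le> 4 * A * (A * l\<^sup>2 - B * l + C)" by simp
  thus ?thesis using A by (simp add: zero_le_mult_iff)
qed

lemma LB1: assumes h: "h \<ge> 0" shows "2 * sqrt ((p - 1) / (p * (2 * h + h\<^sup>2) + 1)) < cs h"
proof (rule LBL[OF h])
  define X where "X = 2 * sqrt ((p - 1) / (p * (2 * h + h\<^sup>2) + 1))"
  have D: "p * (2 * h + h\<^sup>2) + 1 > 0"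
  proof -
    have "0 \<le> p * (2 * h + h\<^sup>2)" using p_gt h by simp
    thus ?thesis by simp
  qed
  have X0: "X > 0" unfolding X_def using p_gt D by simp
  have X2: "X\<^sup>2 * (p * (2 * h + h\<^sup>2) + 1) = 4 * (p - 1)"
  proof -
    have "X\<^sup>2 = 4 * ((p - 1) / (p * (2 * h + h\<^sup>2) + 1))"
      unfolding X_def using p_gt D by (simp add: power_mult_distrib real_sqrt_pow2)
    thus ?thesis using D by simp
  qed
  fix l :: real assume l: "l > 0"
  define a where "a = X * h"
  define A where "A = 1 + p * a\<^sup>2 / 4"
  define B where "B = X + p * a"
  define C where "C = p - 1"
  have A0: "A > 0" unfolding A_def using p_gt by (simp add: add_pos_nonneg)
  have disc: "B\<^sup>2 = 4 * A * C"
  proof -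
    have "B\<^sup>2 - 4 * A * C = X\<^sup>2 * (p * (2 * h + h\<^sup>2) + 1) - 4 * (p - 1)"
      unfolding A_def B_def C_def a_def by (simp add: power2_eq_square algebra_simps)
    thus ?thesis using X2 by simp
  qed
  have ident: "\<And>y. y\<^sup>2 - X * y - 1 + p * (1 - a * y / 2)\<^sup>2 = A * y\<^sup>2 - B * y + C"
    unfolding A_def B_def C_def by (simp add: power2_eq_square algebra_simps)
  have Q: "0 \<le> l\<^sup>2 - X * l - 1 + p * exp (- l * X * h)"
  proof (cases "a * l \<le> 2")
    case True
    have "1 - a * l / 2 \<le> exp (- (a * l / 2))" using exp_ge_add_one_self[of "- (a * l / 2)"] by simp
    moreover have "0 \<le> 1 - a * l / 2" using True by simp
    ultimately have "(1 - a * l / 2)\<^sup>2 \<le> (exp (- (a * l / 2)))\<^sup>2" by (rule power_mono)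
    also have "(exp (- (a * l / 2)))\<^sup>2 = exp (- l * X * h)"
      unfolding a_def by (simp add: power2_eq_square flip: exp_add)
    finally have "p * (1 - a * l / 2)\<^sup>2 \<le> p * exp (- l * X * h)" using p_gt by simp
    moreover have "0 \<le> A * l\<^sup>2 - B * l + C" by (rule quad_nonneg[OF A0 disc])
    ultimately show ?thesis using ident[of l] by simp
  next
    case False
    hence a0': "a > 0" using l by (smt (verit) mult_nonpos_nonneg)
    define l0 where "l0 = 2 / a"
    have l0l: "l0 < l" unfolding l0_def using False a0' by (simp add: divide_less_eq mult.commute)
    have l00: "l0 > 0" unfolding l0_def using a0' by simp
    have "0 \<le> A * l0\<^sup>2 - B * l0 + C" by (rule quad_nonneg[OF A0 disc])
    moreover have "1 - a * l0 / 2 = 0" unfolding l0_def using a0' by simp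
    ultimately have q0: "0 \<le> l0\<^sup>2 - X * l0 - 1" using ident[of l0] by simp
    have "X\<^sup>2 * h \<le> 4"
    proof -
      have "(p - 1) * h \<le> p * (2 * h + h\<^sup>2) + 1" using p_gt h by (simp add: algebra_simps add_nonneg_nonneg)
      hence "4 * ((p - 1) * h) \<le> 4 * (p * (2 * h + h\<^sup>2) + 1)" by (rule mult_left_mono) simp
      moreover have "X\<^sup>2 * (p * (2 * h + h\<^sup>2) + 1) * h = 4 * ((p - 1) * h)" by (simp only: X2 mult.assoc)
      ultimately have "X\<^sup>2 * (p * (2 * h + h\<^sup>2) + 1) * h \<le> 4 * (p * (2 * h + h\<^sup>2) + 1)"
        by (simp only:)
      hence "(X\<^sup>2 * h) * (p * (2 * h + h\<^sup>2) + 1) \<le> 4 * (p * (2 * h + h\<^sup>2) + 1)"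
        by (metis mult.commute mult.assoc)
      thus ?thesis using D by (simp only: mult_le_cancel_right_pos)
    qed
    hence "X \<le> 2 * l0"
    proof -
      assume "X\<^sup>2 * h \<le> 4"
      have "X * a = X\<^sup>2 * h" unfolding a_def by (simp add: power2_eq_square)
      hence "X * a \<le> 4" using \<open>X\<^sup>2 * h \<le> 4\<close> by simp
      thus ?thesis unfolding l0_def using a0' by (simp add: le_divide_eq mult.commute)
    qed
    have "l\<^sup>2 - X * l - 1 - (l0\<^sup>2 - X * l0 - 1) = (l - l0) * (l + l0 - X)"
      by (simp add: power2_eq_square algebra_simps)
    also have "\<dots> \<ge> 0" using l0l \<open>X \<le> 2 * l0\<close> by simp
    finally have "0 \<le> l\<^sup>2 - X * l - 1" using q0 by simp
    moreover have "0 \<le> p * exp (- l * X * h)" using p_gt by simp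
    ultimately show ?thesis by simp
  qed
  show "0 < G h X l" using Q G_gt_simple[OF l, of X h] by simp
qed

definition r0 :: real where "r0 = sqrt (ln p)"

lemma r0_pos: "r0 > 0" unfolding r0_def using p_gt by simp
lemma r0_sq: "r0\<^sup>2 = ln p" unfolding r0_def using p_gt by simp

lemma k2_eq: "k2 K p = 1 / r0 * ln (p * L 0 r0)"
  unfolding k2_def r0_def[symmetric] L0_eq by (simp add: mult_ac)

lemma pL_gt1: "1 < p * L 0 r0"
proof -
  have "p * 1 \<le> p * L 0 r0" by (rule mult_left_mono[OF L0_ge1]) (use p_gt in simp)
  thus ?thesis using p_gt by linarith
qed

lemma k2_pos: "k2 K p > 0"
  unfolding k2_eq using pL_gt1 r0_pos by simp

lemma k2_r0: "r0 * k2 K p = ln (p * L 0 r0)"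
  unfolding k2_eq using r0_pos by simp

lemma exp_k2: "exp (- (r0 * k2 K p)) * (p * L 0 r0) = 1"
proof -
  have "exp (- ln (p * L 0 r0)) = 1 / (p * L 0 r0)" using pL_gt1 by (simp add: exp_minus inverse_eq_divide)
  thus ?thesis unfolding k2_r0 using pL_gt1 p_gt L0_pos[of r0] by simp
qed

lemma UB_k2_small: assumes h: "0 < h" "h \<le> 1" shows "cs h < k2 K p / h"
proof (rule UBL[OF less_imp_le[OF h(1)] _ r0_pos])
  show "0 < k2 K p / h" using k2_pos h by simp
  have ex: "p * exp (- r0 * (k2 K p / h) * h) * L 0 r0 = 1"
    using exp_k2 h by (simp add: mult_ac)
  have "G h (k2 K p / h) r0 = ln p - ln (p * L 0 r0) / h"
    unfolding G_def ex r0_sq using k2_r0 by (simp add: mult_ac)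
  also have "ln (p * L 0 r0) = ln p + ln (L 0 r0)" using p_gt L0_pos[of r0] by (simp add: ln_mult)
  finally have g: "G h (k2 K p / h) r0 = ln p - (ln p + ln (L 0 r0)) / h" .
  have lL: "ln (L 0 r0) > 0" using L0_gt1[of r0] r0_pos by simp
  have lp: "ln p > 0" using p_gt by simp
  have "ln p + ln (L 0 r0) \<le> (ln p + ln (L 0 r0)) / h"
    using h lL lp by (simp add: le_divide_eq mult_le_cancel_left1)
  thus "G h (k2 K p / h) r0 < 0" unfolding g using lL by simp
qed

lemma UB_k2_large: assumes h: "1 \<le> h" shows "cs h < k2 K p / sqrt h"
proof -
  have sh: "sqrt h \<ge> 1" using h by simp
  define l where "l = r0 / sqrt h"
  have l0: "l > 0" unfolding l_def using r0_pos sh by simp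
  have lr: "l \<le> r0" unfolding l_def using r0_pos sh by (simp add: divide_le_eq mult_le_cancel_left1)
  show ?thesis
  proof (rule UBL[OF _ _ l0])
    show "0 \<le> h" using h by simp
    show "0 < k2 K p / sqrt h" using k2_pos sh by simp
    have shh: "sqrt h * sqrt h = h" using h by simp
    have e1: "- l * (k2 K p / sqrt h) * h = - (r0 * k2 K p)"
      unfolding l_def using shh sh by (simp add: field_simps)
    have Lm: "L 0 l \<le> L 0 r0" using L0_mono[of l r0] l0 lr by simp
    have "p * exp (- (r0 * k2 K p)) * L 0 l \<le> p * exp (- (r0 * k2 K p)) * L 0 r0"
      using Lm p_gt by simp
    also have "\<dots> = 1" using exp_k2 by (simp add: mult_ac)
    finally have P1: "p * exp (- l * (k2 K p / sqrt h) * h) * L 0 l \<le> 1" unfolding e1 .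
    have l2: "l\<^sup>2 = ln p / h" unfolding l_def using r0_sq h by (simp add: power_divide)
    have lk: "k2 K p / sqrt h * l = ln (p * L 0 r0) / h"
      unfolding l_def using k2_r0 shh sh by (simp add: field_simps)
    have "G h (k2 K p / sqrt h) l \<le> ln p / h - ln (p * L 0 r0) / h"
      unfolding G_def l2 lk using P1 by simp
    also have "\<dots> < 0"
    proof -
      have "ln p < ln (p * L 0 r0)" using p_gt L0_gt1[of r0] r0_pos by simp
      thus ?thesis using h by (simp add: divide_strict_right_mono)
    qed
    finally show "G h (k2 K p / sqrt h) l < 0" .
  qed
qed

lemma C2_bound: "\<exists>C2. C2 > r0 \<and> (\<forall>h\<ge>1. cs h < C2 / h)"
proof -
  define W where "W = p * L 0 (1 / 2)"
  have W0: "W > 0" unfolding W_def using p_gt L0_pos by simp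
  define C2 where "C2 = max (r0 + 1) (2 * ln (2 * W))"
  have C2r: "C2 > r0" unfolding C2_def by simp
  have C20: "C2 > 0" using C2r r0_pos by simp
  have lnW: "ln (2 * W) \<le> C2 / 2" unfolding C2_def by simp
  have ex: "exp (- (C2 / 2)) \<le> exp (- ln (2 * W))" using lnW by simp
  have ex2: "exp (- ln (2 * W)) = 1 / (2 * W)" using W0 by (simp add: exp_minus inverse_eq_divide)
  have We: "W * exp (- (C2 / 2)) \<le> 1 / 2"
  proof -
    have "W * exp (- (C2 / 2)) \<le> W * (1 / (2 * W))"
      using ex ex2 W0 by (intro mult_left_mono) auto
    also have "\<dots> = 1 / 2" using W0 by simp
    finally show ?thesis .
  qed
  have main: "cs h < C2 / h" if h: "1 \<le> h" for h
  proof -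
    have h0: "0 \<le> h" using h by simp
    have Y0: "0 < C2 / h" using h C20 by simp
    have e: "- (1 / 2) * (C2 / h) * h = - (C2 / 2)" using h by simp
    have "G h (C2 / h) (1 / 2) = (1 / 2)\<^sup>2 - C2 / h * (1 / 2) - 1 + p * exp (- (C2 / 2)) * L 0 (1 / 2)"
      unfolding G_def e ..
    also have "\<dots> = 1 / 4 - C2 / h / 2 - 1 + W * exp (- (C2 / 2))"
      unfolding W_def by (simp add: power2_eq_square)
    also have "\<dots> < 0"
    proof -
      have "0 \<le> C2 / h / 2" using Y0 by simp
      thus ?thesis using We by linarith
    qed
    finally have "G h (C2 / h) (1 / 2) < 0" .
    moreover have l: "(0::real) < 1 / 2" by simp
    ultimately show ?thesis using UBL[OF h0 Y0 l] by blast
  qed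
  show ?thesis using C2r main by blast
qed

definition G2 :: "real \<Rightarrow> real \<Rightarrow> real \<Rightarrow> real" where
  "G2 h c l = 2 + p * exp (- l * c * h) * (L 2 l - 2 * (c * h) * L 1 l + (c * h)\<^sup>2 * L 0 l)"

lemma G_deriv_l: "((\<lambda>y. G h c y) has_real_derivative G1 h c l) (at l)"
  unfolding G_def G1_def by (auto intro!: derivative_eq_intros simp: algebra_simps)

lemma G1_deriv_l: "((\<lambda>y. G1 h c y) has_real_derivative G2 h c l) (at l)"
  unfolding G1_def G2_def by (auto intro!: derivative_eq_intros simp: algebra_simps power2_eq_square numeral_2_eq_2)

lemma G2_ge2: "2 \<le> G2 h c l"
proof -
  have "0 \<le> L 2 l - 2 * (c * h) * L 1 l + (c * h)\<^sup>2 * L 0 l" by (rule G2_nonneg)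
  hence "0 \<le> p * exp (- l * c * h) * (L 2 l - 2 * (c * h) * L 1 l + (c * h)\<^sup>2 * L 0 l)"
    using p_gt by simp
  thus ?thesis unfolding G2_def by simp
qed

lemma G_quad: assumes h: "h \<ge> 0" shows "(y - lam h)\<^sup>2 \<le> G h (cs h) y"
proof -
  let ?c = "cs h" and ?l = "lam h"
  have "0 \<le> G h ?c y - (y - ?l)\<^sup>2"
  proof (rule nonneg_from_second[where f = "\<lambda>y. G h ?c y - (y - ?l)\<^sup>2" and f' = "\<lambda>y. G1 h ?c y - 2 * (y - ?l)" and f'' = "\<lambda>y. G2 h ?c y - 2"])
    show "((\<lambda>y. G h ?c y - (y - ?l)\<^sup>2) has_real_derivative G1 h ?c y - 2 * (y - ?l)) (at y)" for y
      using G_deriv_l[of h ?c y] by (auto intro!: derivative_eq_intros)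
    show "((\<lambda>y. G1 h ?c y - 2 * (y - ?l)) has_real_derivative G2 h ?c y - 2) (at y)" for y
      using G1_deriv_l[of h ?c y] by (auto intro!: derivative_eq_intros)
    show "0 \<le> G2 h ?c y - 2" for y using G2_ge2 by simp
    show "G h ?c ?l - (?l - ?l)\<^sup>2 = 0" using G_lam[OF h] by simp
    show "G1 h ?c ?l - 2 * (?l - ?l) = 0" using G1_lam[OF h] by simp
  qed
  thus ?thesis by simp
qed

lemma lam_bound: assumes h: "h \<ge> 0" shows "lam h < cs h + 1"
proof (rule ccontr)
  let ?c = "cs h" and ?l = "lam h"
  assume "\<not> ?l < ?c + 1"
  hence l1: "?c + 1 \<le> ?l" by simp
  have c0: "?c > 0" using cs_pos[OF h] .
  have "(?c + 1) * ?l \<le> ?l * ?l" using l1 lam_pos[OF h] by (intro mult_right_mono) auto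
  hence "?c * ?l + 1 \<le> ?l\<^sup>2" using l1 c0 by (simp add: algebra_simps power2_eq_square)
  moreover have "0 < p * exp (- ?l * ?c * h) * L 0 ?l" using p_gt L0_pos by simp
  ultimately have "0 < G h ?c ?l" unfolding G_def by simp
  thus False using G_lam[OF h] by simp
qed

lemma cs_le0: assumes h: "h \<ge> 0" shows "cs h \<le> cs 0"
proof (cases "h = 0")
  case False thus ?thesis using cs_strict_mono[of 0 h] h by simp
qed simp

definition Mc :: real where "Mc = p * L 0 (cs 0 + 1) * cs 0"

lemma cs_lip: assumes a: "0 \<le> a" and ab: "a \<le> b" shows "cs a - cs b \<le> Mc * (b - a)"
proof -
  have b: "0 \<le> b" using a ab by simp
  let ?l = "lam b" and ?c = "cs b" and ?c' = "cs a"
  have l0: "?l > 0" using lam_pos[OF b] .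
  have c0: "?c > 0" using cs_pos[OF b] .
  have cc': "?c \<le> ?c'" using cs_strict_mono[OF a] ab by (cases "a = b") (auto simp: less_imp_le)
  have g1: "0 \<le> G a ?c' ?l" by (rule G_cs_nonneg[OF a l0])
  have g2: "G b ?c ?l = 0" by (rule G_lam[OF b])
  have e1: "exp (- ?l * ?c' * a) \<le> exp (- ?l * ?c * a)"
    using cc' l0 a by (simp add: mult_right_mono mult_left_mono)
  have e2': "exp (- (?l * ?c * a)) - exp (- (?l * ?c * b)) \<le> ?l * ?c * b - ?l * ?c * a"
    using l0 c0 a ab by (intro exp_neg_diff_le) (auto intro!: mult_left_mono)
  have e2: "exp (- ?l * ?c * a) - exp (- ?l * ?c * b) \<le> ?l * ?c * (b - a)"
    using e2' by (simp add: algebra_simps)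
  have "0 \<le> G a ?c' ?l - G b ?c ?l" using g1 g2 by simp
  also have "G a ?c' ?l - G b ?c ?l = - (?c' - ?c) * ?l + p * L 0 ?l * (exp (- ?l * ?c' * a) - exp (- ?l * ?c * b))"
    unfolding G_def by (simp add: algebra_simps)
  also have "\<dots> \<le> - (?c' - ?c) * ?l + p * L 0 ?l * (?l * ?c * (b - a))"
  proof -
    have "exp (- ?l * ?c' * a) - exp (- ?l * ?c * b) \<le> ?l * ?c * (b - a)"
      using e1 e2 by linarith
    thus ?thesis using p_gt L0_pos[of ?l] by (intro add_left_mono mult_left_mono) auto
  qed
  finally have "(?c' - ?c) * ?l \<le> (p * L 0 ?l * ?c * (b - a)) * ?l" by (simp add: algebra_simps)
  hence "?c' - ?c \<le> p * L 0 ?l * ?c * (b - a)" using l0 by simp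
  also have "\<dots> \<le> Mc * (b - a)"
  proof -
    have "L 0 ?l \<le> L 0 (cs 0 + 1)"
      using L0_mono[of ?l "cs 0 + 1"] l0 lam_bound[OF b] cs_le0[OF b] by simp
    moreover have "?c \<le> cs 0" by (rule cs_le0[OF b])
    ultimately have "p * L 0 ?l * ?c \<le> p * L 0 (cs 0 + 1) * cs 0"
      using p_gt L0_pos[of ?l] L0_pos[of "cs 0 + 1"] c0 by (intro mult_mono) (auto simp: less_imp_le)
    thus ?thesis unfolding Mc_def using ab by (intro mult_right_mono) auto
  qed
  finally show ?thesis .
qed

lemma Mc_nonneg: "0 \<le> Mc"
  unfolding Mc_def using p_gt L0_pos[of "cs 0 + 1"] cs_pos[of 0] by simp

lemma cs_lip_abs: assumes "0 \<le> a" "0 \<le> b" shows "\<bar>cs a - cs b\<bar> \<le> Mc * \<bar>a - b\<bar>"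
proof (cases "a \<le> b")
  case True
  have "cs b \<le> cs a" using cs_strict_mono[OF assms(1)] True by (cases "a = b") (auto simp: less_imp_le)
  thus ?thesis using cs_lip[OF assms(1) True] True by simp
next
  case False
  have "cs a \<le> cs b" using cs_strict_mono[OF assms(2), of a] False by simp
  thus ?thesis using cs_lip[OF assms(2), of a] False by simp
qed

lemma cs_cont: assumes h: "h \<ge> 0" shows "(cs \<longlongrightarrow> cs h) (at h within {0..})"
proof -
  have "((\<lambda>y. cs y - cs h) \<longlongrightarrow> 0) (at h within {0..})"
  proof (rule Lim_null_comparison)
    show "\<forall>\<^sub>F y in at h within {0..}. norm (cs y - cs h) \<le> Mc * \<bar>y - h\<bar>"
      using cs_lip_abs h by (auto simp: eventually_at_filter)
    show "((\<lambda>y. Mc * \<bar>y - h\<bar>) \<longlongrightarrow> 0) (at h within {0..})"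
      by (rule tendsto_eq_intros refl | simp)+
  qed
  thus ?thesis by (simp add: LIM_zero_iff)
qed

definition Lam :: real where "Lam = cs 0 + 1"

lemma lam_le_Lam: "h \<ge> 0 \<Longrightarrow> lam h \<le> Lam"
  unfolding Lam_def using lam_bound cs_le0 by (smt (verit))

lemma lam_diff_bound: assumes h: "h \<ge> 0" and h': "h' \<ge> 0"
  shows "(lam h' - lam h)\<^sup>2 \<le> \<bar>cs h - cs h'\<bar> * Lam + p * L 0 Lam * Lam * \<bar>cs h * h - cs h' * h'\<bar>"
proof -
  let ?l = "lam h" and ?c = "cs h" and ?l' = "lam h'" and ?c' = "cs h'"
  have l'0: "?l' > 0" by (rule lam_pos[OF h'])
  have l'L: "?l' \<le> Lam" by (rule lam_le_Lam[OF h'])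
  have "(?l' - ?l)\<^sup>2 \<le> G h ?c ?l' - G h' ?c' ?l'" using G_quad[OF h, of ?l'] G_lam[OF h'] by simp
  also have "G h ?c ?l' - G h' ?c' ?l' = (?c' - ?c) * ?l' + p * L 0 ?l' * (exp (- (?l' * ?c * h)) - exp (- (?l' * ?c' * h')))"
    unfolding G_def by (simp add: algebra_simps)
  also have "\<dots> \<le> \<bar>?c - ?c'\<bar> * Lam + p * L 0 Lam * Lam * \<bar>?c * h - ?c' * h'\<bar>"
  proof -
    have A: "(?c' - ?c) * ?l' \<le> \<bar>?c - ?c'\<bar> * Lam"
    proof -
      have "(?c' - ?c) * ?l' \<le> \<bar>?c - ?c'\<bar> * ?l'" using l'0 by (intro mult_right_mono) auto
      also have "\<dots> \<le> \<bar>?c - ?c'\<bar> * Lam" using l'L by (intro mult_left_mono) auto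
      finally show ?thesis .
    qed
    have ex: "\<bar>exp (- (?l' * ?c * h)) - exp (- (?l' * ?c' * h'))\<bar> \<le> \<bar>?l' * ?c * h - ?l' * ?c' * h'\<bar>"
      using l'0 cs_pos[OF h] cs_pos[OF h'] h h' by (intro exp_neg_abs_diff) auto
    also have "\<dots> = ?l' * \<bar>?c * h - ?c' * h'\<bar>"
    proof -
      have "?l' * ?c * h - ?l' * ?c' * h' = ?l' * (?c * h - ?c' * h')" by (simp add: algebra_simps)
      thus ?thesis using l'0 by (simp add: abs_mult)
    qed
    also have "\<dots> \<le> Lam * \<bar>?c * h - ?c' * h'\<bar>" using l'L by (intro mult_right_mono) auto
    finally have ex': "\<bar>exp (- (?l' * ?c * h)) - exp (- (?l' * ?c' * h'))\<bar> \<le> Lam * \<bar>?c * h - ?c' * h'\<bar>" .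
    have "p * L 0 ?l' * (exp (- (?l' * ?c * h)) - exp (- (?l' * ?c' * h')))
        \<le> p * L 0 ?l' * \<bar>exp (- (?l' * ?c * h)) - exp (- (?l' * ?c' * h'))\<bar>"
      using p_gt L0_pos[of ?l'] by (intro mult_left_mono) auto
    also have "\<dots> \<le> p * L 0 Lam * (Lam * \<bar>?c * h - ?c' * h'\<bar>)"
      using ex' L0_mono[of ?l' Lam] l'0 l'L p_gt L0_pos[of ?l'] by (intro mult_mono) auto
    finally show ?thesis using A by (simp add: mult_ac)
  qed
  finally show ?thesis .
qed

lemma lam_cont: assumes h: "h \<ge> 0" shows "(lam \<longlongrightarrow> lam h) (at h within {0..})"
proof -
  define B where "B y = \<bar>cs h - cs y\<bar> * Lam + p * L 0 Lam * Lam * \<bar>cs h * h - cs y * y\<bar>" for y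
  have cc: "(cs \<longlongrightarrow> cs h) (at h within {0..})" by (rule cs_cont[OF h])
  have B0: "(B \<longlongrightarrow> 0) (at h within {0..})"
  proof -
    have "(B \<longlongrightarrow> \<bar>cs h - cs h\<bar> * Lam + p * L 0 Lam * Lam * \<bar>cs h * h - cs h * h\<bar>) (at h within {0..})"
      unfolding B_def by (intro tendsto_intros cc tendsto_ident_at)
    thus ?thesis by simp
  qed
  have "((\<lambda>y. lam y - lam h) \<longlongrightarrow> 0) (at h within {0..})"
  proof (rule Lim_null_comparison)
    show "\<forall>\<^sub>F y in at h within {0..}. norm (lam y - lam h) \<le> sqrt (B y)"
    proof (rule eventually_at_filter[THEN iffD2], rule always_eventually, intro allI impI)
      fix y assume "y \<noteq> h" and y: "y \<in> {0..}"
      have "(lam y - lam h)\<^sup>2 \<le> B y" unfolding B_def using lam_diff_bound[OF h] y by simp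
      hence "sqrt ((lam y - lam h)\<^sup>2) \<le> sqrt (B y)" by (rule real_sqrt_le_mono)
      thus "norm (lam y - lam h) \<le> sqrt (B y)" by simp
    qed
    show "((\<lambda>y. sqrt (B y)) \<longlongrightarrow> 0) (at h within {0..})"
      using tendsto_real_sqrt[OF B0] by simp
  qed
  thus ?thesis by (simp add: LIM_zero_iff)
qed


definition Rc :: "real \<Rightarrow> real" where
  "Rc h = - (p * L 0 (lam h) * exp (- (lam h * cs h * h)) * cs h) / (1 + p * L 0 (lam h) * exp (- (lam h * cs h * h)) * h)"

lemma cs_dq_bound:
  assumes h: "h \<ge> 0" and y: "y \<ge> 0" and yh: "y \<noteq> h" and T1: "T1 > 0" and T2: "T2 > 0"
    and eq1: "exp (- (lam h * cs y * y)) - exp (- (lam h * cs h * h)) = - T1 * (lam h * cs y * y - lam h * cs h * h)"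
    and eq2: "exp (- (lam y * cs y * y)) - exp (- (lam y * cs h * h)) = - T2 * (lam y * cs y * y - lam y * cs h * h)"
  shows "\<bar>(cs y - cs h) / (y - h) - R\<bar> \<le>
     \<bar>- (p * L 0 (lam h) * T1 * cs y) / (1 + p * L 0 (lam h) * T1 * h) - R\<bar> +
     \<bar>- (p * L 0 (lam y) * T2 * cs y) / (1 + p * L 0 (lam y) * T2 * h) - R\<bar>"
proof -
  let ?l = "lam h" and ?c = "cs h" and ?l' = "lam y" and ?c' = "cs y"
  define P where "P = p * L 0 ?l"
  define P' where "P' = p * L 0 ?l'"
  have P0: "P > 0" unfolding P_def using p_gt L0_pos by simp
  have P'0: "P' > 0" unfolding P'_def using p_gt L0_pos by simp
  have l0: "?l > 0" by (rule lam_pos[OF h])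
  have l'0: "?l' > 0" by (rule lam_pos[OF y])
  have g1: "0 \<le> G y ?c' ?l - G h ?c ?l" using G_cs_nonneg[OF y l0] G_lam[OF h] by simp
  have "G y ?c' ?l - G h ?c ?l = - (?c' - ?c) * ?l + P * (exp (- (?l * ?c' * y)) - exp (- (?l * ?c * h)))"
    unfolding G_def P_def by (simp add: algebra_simps)
  also have "\<dots> = - ?l * ((?c' - ?c) * (1 + P * T1 * h) + P * T1 * ?c' * (y - h))"
    unfolding eq1 by (simp add: algebra_simps)
  finally have "0 \<le> - ?l * ((?c' - ?c) * (1 + P * T1 * h) + P * T1 * ?c' * (y - h))" using g1 by simp
  hence i1: "(?c' - ?c) * (1 + (P * T1) * h) + (P * T1) * ?c' * (y - h) \<le> 0"
    using l0 by (simp add: mult_le_0_iff)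
  have g2: "0 \<le> G h ?c ?l' - G y ?c' ?l'" using G_cs_nonneg[OF h l'0] G_lam[OF y] by simp
  have "G h ?c ?l' - G y ?c' ?l' = (?c' - ?c) * ?l' - P' * (exp (- (?l' * ?c' * y)) - exp (- (?l' * ?c * h)))"
    unfolding G_def P'_def by (simp add: algebra_simps)
  also have "\<dots> = ?l' * ((?c' - ?c) * (1 + P' * T2 * h) + P' * T2 * ?c' * (y - h))"
    unfolding eq2 by (simp add: algebra_simps)
  finally have "0 \<le> ?l' * ((?c' - ?c) * (1 + P' * T2 * h) + P' * T2 * ?c' * (y - h))" using g2 by simp
  hence i2: "0 \<le> (?c' - ?c) * (1 + (P' * T2) * h) + (P' * T2) * ?c' * (y - h)"
    using l'0 by (simp add: zero_le_mult_iff)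
  have "\<bar>(?c' - ?c) / (y - h) - R\<bar> \<le> \<bar>- ((P * T1) * ?c') / (1 + (P * T1) * h) - R\<bar> + \<bar>- ((P' * T2) * ?c') / (1 + (P' * T2) * h) - R\<bar>"
    using yh P0 P'0 T1 T2 h by (intro dq_alg[OF _ _ _ _ i1 i2]) auto
  thus ?thesis unfolding P_def P'_def by (simp add: mult_ac)
qed


lemma tendsto_abs_diff_zero:
  fixes f :: "real \<Rightarrow> real"
  shows "(f \<longlongrightarrow> a) F \<Longrightarrow> ((\<lambda>y. \<bar>f y - a\<bar>) \<longlongrightarrow> 0) F"
  using tendsto_rabs[OF tendsto_diff[of f a F "\<lambda>_. a" a]] by simp

lemma cs_deriv: assumes h: "h \<ge> 0" shows "(cs has_real_derivative Rc h) (at h within {0..})"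
proof -
  let ?F = "at h within {0..}"
  let ?l = "lam h" and ?c = "cs h"
  define E where "E = exp (- (?l * ?c * h))"
  define P where "P = p * L 0 ?l"
  define T1 where "T1 y = (SOME T. exp (- (?l * cs y * y)) - exp (- (?l * ?c * h)) = - T * (?l * cs y * y - ?l * ?c * h)
     \<and> \<bar>T - exp (- (?l * ?c * h))\<bar> \<le> \<bar>exp (- (?l * cs y * y)) - exp (- (?l * ?c * h))\<bar> \<and> T > 0)" for y
  define T2 where "T2 y = (SOME T. exp (- (lam y * cs y * y)) - exp (- (lam y * ?c * h)) = - T * (lam y * cs y * y - lam y * ?c * h)
     \<and> \<bar>T - exp (- (lam y * ?c * h))\<bar> \<le> \<bar>exp (- (lam y * cs y * y)) - exp (- (lam y * ?c * h))\<bar> \<and> T > 0)" for y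
  have T1p: "exp (- (?l * cs y * y)) - exp (- (?l * ?c * h)) = - T1 y * (?l * cs y * y - ?l * ?c * h)
     \<and> \<bar>T1 y - exp (- (?l * ?c * h))\<bar> \<le> \<bar>exp (- (?l * cs y * y)) - exp (- (?l * ?c * h))\<bar> \<and> T1 y > 0" for y
    unfolding T1_def by (rule someI_ex, rule exp_dd)
  have T2p: "exp (- (lam y * cs y * y)) - exp (- (lam y * ?c * h)) = - T2 y * (lam y * cs y * y - lam y * ?c * h)
     \<and> \<bar>T2 y - exp (- (lam y * ?c * h))\<bar> \<le> \<bar>exp (- (lam y * cs y * y)) - exp (- (lam y * ?c * h))\<bar> \<and> T2 y > 0" for y
    unfolding T2_def by (rule someI_ex, rule exp_dd)
  have csT: "(cs \<longlongrightarrow> ?c) ?F" by (rule cs_cont[OF h])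
  have lamT: "(lam \<longlongrightarrow> ?l) ?F" by (rule lam_cont[OF h])
  have idT: "((\<lambda>y. y) \<longlongrightarrow> h) ?F" by (rule tendsto_ident_at)
  have T1T: "(T1 \<longlongrightarrow> E) ?F"
  proof -
    have "((\<lambda>y. T1 y - E) \<longlongrightarrow> 0) ?F"
    proof (rule Lim_null_comparison)
      show "\<forall>\<^sub>F y in ?F. norm (T1 y - E) \<le> \<bar>exp (- (?l * cs y * y)) - E\<bar>"
      proof (intro always_eventually allI)
        fix y
        have "\<bar>T1 y - exp (- (?l * ?c * h))\<bar> \<le> \<bar>exp (- (?l * cs y * y)) - exp (- (?l * ?c * h))\<bar>"
          using T1p[of y] by blast
        thus "norm (T1 y - E) \<le> \<bar>exp (- (?l * cs y * y)) - E\<bar>" unfolding E_def real_norm_def .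
      qed
      have "((\<lambda>y. exp (- (?l * cs y * y))) \<longlongrightarrow> E) ?F"
        unfolding E_def by (intro tendsto_intros csT idT)
      thus "((\<lambda>y. \<bar>exp (- (?l * cs y * y)) - E\<bar>) \<longlongrightarrow> 0) ?F" by (rule tendsto_abs_diff_zero)
    qed
    thus ?thesis by (simp add: LIM_zero_iff)
  qed
  have T2T: "(T2 \<longlongrightarrow> E) ?F"
  proof -
    have "((\<lambda>y. T2 y - E) \<longlongrightarrow> 0) ?F"
    proof (rule Lim_null_comparison)
      show "\<forall>\<^sub>F y in ?F. norm (T2 y - E) \<le> \<bar>exp (- (lam y * cs y * y)) - exp (- (lam y * ?c * h))\<bar> + \<bar>exp (- (lam y * ?c * h)) - E\<bar>"
      proof (intro always_eventually allI)
        fix y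
        have "norm (T2 y - E) \<le> \<bar>T2 y - exp (- (lam y * ?c * h))\<bar> + \<bar>exp (- (lam y * ?c * h)) - E\<bar>" by simp
        thus "norm (T2 y - E) \<le> \<bar>exp (- (lam y * cs y * y)) - exp (- (lam y * ?c * h))\<bar> + \<bar>exp (- (lam y * ?c * h)) - E\<bar>"
          using T2p[of y] by linarith
      qed
      have a1: "((\<lambda>y. exp (- (lam y * cs y * y))) \<longlongrightarrow> E) ?F"
        unfolding E_def by (intro tendsto_intros csT idT lamT)
      have a2: "((\<lambda>y. exp (- (lam y * ?c * h))) \<longlongrightarrow> E) ?F"
        unfolding E_def by (intro tendsto_intros lamT)
      have "((\<lambda>y. \<bar>exp (- (lam y * cs y * y)) - exp (- (lam y * ?c * h))\<bar> + \<bar>exp (- (lam y * ?c * h)) - E\<bar>)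
             \<longlongrightarrow> \<bar>E - E\<bar> + \<bar>E - E\<bar>) ?F"
        by (intro tendsto_intros a1 a2)
      thus "((\<lambda>y. \<bar>exp (- (lam y * cs y * y)) - exp (- (lam y * ?c * h))\<bar> + \<bar>exp (- (lam y * ?c * h)) - E\<bar>) \<longlongrightarrow> 0) ?F"
        by simp
    qed
    thus ?thesis by (simp add: LIM_zero_iff)
  qed
  have Rc_eq: "Rc h = - (P * E * ?c) / (1 + P * E * h)" unfolding Rc_def P_def E_def ..
  have den: "1 + P * E * h \<noteq> 0"
  proof -
    have "0 \<le> P * E * h" unfolding P_def E_def using p_gt L0_pos[of ?l] h by simp
    thus ?thesis by simp
  qed
  define r1 where "r1 y = - (p * L 0 ?l * T1 y * cs y) / (1 + p * L 0 ?l * T1 y * h)" for y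
  define r2 where "r2 y = - (p * L 0 (lam y) * T2 y * cs y) / (1 + p * L 0 (lam y) * T2 y * h)" for y
  have r1T: "(r1 \<longlongrightarrow> Rc h) ?F"
    unfolding r1_def Rc_eq P_def by (intro tendsto_intros T1T csT) (use den P_def in simp)
  have r2T: "(r2 \<longlongrightarrow> Rc h) ?F"
    unfolding r2_def Rc_eq P_def by (intro tendsto_intros T2T csT lamT) (use den P_def in simp)
  have "((\<lambda>y. (cs y - cs h) / (y - h) - Rc h) \<longlongrightarrow> 0) ?F"
  proof (rule Lim_null_comparison)
    show "\<forall>\<^sub>F y in ?F. norm ((cs y - cs h) / (y - h) - Rc h) \<le> \<bar>r1 y - Rc h\<bar> + \<bar>r2 y - Rc h\<bar>"
    proof (rule eventually_at_filter[THEN iffD2], rule always_eventually, intro allI impI)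
      fix y assume yh: "y \<noteq> h" and y: "y \<in> {0..}"
      show "norm ((cs y - cs h) / (y - h) - Rc h) \<le> \<bar>r1 y - Rc h\<bar> + \<bar>r2 y - Rc h\<bar>"
        unfolding r1_def r2_def real_norm_def
        using T1p[of y] T2p[of y] y yh h by (intro cs_dq_bound) auto
    qed
    have "((\<lambda>y. \<bar>r1 y - Rc h\<bar> + \<bar>r2 y - Rc h\<bar>) \<longlongrightarrow> \<bar>Rc h - Rc h\<bar> + \<bar>Rc h - Rc h\<bar>) ?F"
      by (intro tendsto_intros r1T r2T)
    thus "((\<lambda>y. \<bar>r1 y - Rc h\<bar> + \<bar>r2 y - Rc h\<bar>) \<longlongrightarrow> 0) ?F" by simp
  qed
  hence "((\<lambda>y. (cs y - cs h) / (y - h)) \<longlongrightarrow> Rc h) ?F" by (simp add: LIM_zero_iff)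
  thus ?thesis by (simp add: has_field_derivative_iff)
qed


definition D1 :: "real \<Rightarrow> real" where
  "D1 h = - Rc h - p * exp (- (lam h * cs h * h)) * (Rc h * h + cs h) *
            (lam h * (L 1 (lam h) - cs h * h * L 0 (lam h)) + L 0 (lam h))"

definition Rl :: "real \<Rightarrow> real" where
  "Rl h = - D1 h / G2 h (cs h) (lam h)"

lemma phi_deriv: assumes h: "h \<ge> 0"
  shows "((\<lambda>y. G1 y (cs y) (lam h)) has_real_derivative D1 h) (at h within {0..})"
proof -
  note cd = cs_deriv[OF h]
  show ?thesis
    unfolding G1_def D1_def
    by (rule derivative_eq_intros cd refl | simp)+ (simp add: algebra_simps)
qed

lemma lam_deriv: assumes h: "h \<ge> 0" shows "(lam has_real_derivative Rl h) (at h within {0..})"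
proof -
  let ?F = "at h within {0..}"
  let ?l = "lam h" and ?c = "cs h"
  define eta where "eta y = (SOME \<eta>. G1 y (cs y) (lam y) - G1 y (cs y) ?l = (lam y - ?l) * G2 y (cs y) \<eta> \<and> \<bar>\<eta> - ?l\<bar> \<le> \<bar>lam y - ?l\<bar>)" for y
  have etap: "G1 y (cs y) (lam y) - G1 y (cs y) ?l = (lam y - ?l) * G2 y (cs y) (eta y) \<and> \<bar>eta y - ?l\<bar> \<le> \<bar>lam y - ?l\<bar>" for y
    unfolding eta_def by (rule someI_ex, rule mvt_abs, rule G1_deriv_l)
  have csT: "(cs \<longlongrightarrow> ?c) ?F" by (rule cs_cont[OF h])
  have lamT: "(lam \<longlongrightarrow> ?l) ?F" by (rule lam_cont[OF h])
  have idT: "((\<lambda>y. y) \<longlongrightarrow> h) ?F" by (rule tendsto_ident_at)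
  have etaT: "(eta \<longlongrightarrow> ?l) ?F"
  proof -
    have "((\<lambda>y. eta y - ?l) \<longlongrightarrow> 0) ?F"
    proof (rule Lim_null_comparison)
      show "\<forall>\<^sub>F y in ?F. norm (eta y - ?l) \<le> \<bar>lam y - ?l\<bar>"
        using etap by (intro always_eventually allI) simp
      show "((\<lambda>y. \<bar>lam y - ?l\<bar>) \<longlongrightarrow> 0) ?F" by (rule tendsto_abs_diff_zero[OF lamT])
    qed
    thus ?thesis by (simp add: LIM_zero_iff)
  qed
  have G2T: "((\<lambda>y. G2 y (cs y) (eta y)) \<longlongrightarrow> G2 h ?c ?l) ?F"
    unfolding G2_def by (intro tendsto_intros etaT csT idT)
  have phiT: "((\<lambda>y. (G1 y (cs y) ?l - G1 h ?c ?l) / (y - h)) \<longlongrightarrow> D1 h) ?F"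
    using phi_deriv[OF h] by (simp add: has_field_derivative_iff)
  have G2h: "G2 h ?c ?l \<noteq> 0" using G2_ge2[of h ?c ?l] by simp
  have quotT: "((\<lambda>y. - ((G1 y (cs y) ?l - G1 h ?c ?l) / (y - h)) / G2 y (cs y) (eta y)) \<longlongrightarrow> Rl h) ?F"
    unfolding Rl_def by (intro tendsto_intros phiT G2T G2h)
  have ev: "\<forall>\<^sub>F y in ?F. - ((G1 y (cs y) ?l - G1 h ?c ?l) / (y - h)) / G2 y (cs y) (eta y) = (lam y - lam h) / (y - h)"
  proof (rule eventually_at_filter[THEN iffD2], rule always_eventually, intro allI impI)
    fix y assume yh: "y \<noteq> h" and y: "y \<in> {0..}"
    have y0: "y \<ge> 0" using y by simp
    have G2y: "G2 y (cs y) (eta y) \<noteq> 0" using G2_ge2[of y "cs y" "eta y"] by simp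
    have "0 - G1 y (cs y) ?l = (lam y - ?l) * G2 y (cs y) (eta y)"
      using etap[of y] G1_lam[OF y0] by simp
    hence "- (G1 y (cs y) ?l - G1 h ?c ?l) = (lam y - ?l) * G2 y (cs y) (eta y)"
      using G1_lam[OF h] by simp
    hence e: "- (G1 y (cs y) ?l - G1 h ?c ?l) / (y - h) / G2 y (cs y) (eta y) = (lam y - ?l) * G2 y (cs y) (eta y) / (y - h) / G2 y (cs y) (eta y)"
      by (simp only:)
    have "- ((G1 y (cs y) ?l - G1 h ?c ?l) / (y - h)) / G2 y (cs y) (eta y) = - (G1 y (cs y) ?l - G1 h ?c ?l) / (y - h) / G2 y (cs y) (eta y)"
      by (simp only: minus_divide_left)
    also have "\<dots> = (lam y - ?l) * G2 y (cs y) (eta y) / (y - h) / G2 y (cs y) (eta y)" by (rule e)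
    also have "\<dots> = (lam y - lam h) / (y - h)" using G2y by simp
    finally show "- ((G1 y (cs y) ?l - G1 h ?c ?l) / (y - h)) / G2 y (cs y) (eta y) = (lam y - lam h) / (y - h)" .
  qed
  have "((\<lambda>y. (lam y - lam h) / (y - h)) \<longlongrightarrow> Rl h) ?F"
    by (rule Lim_transform_eventually[OF quotT ev])
  thus ?thesis by (simp add: has_field_derivative_iff)
qed


definition Ee :: ex where "Ee = Ex (Neg (Mul (Mul Vl Vc) Vh))"
definition Pe :: ex where "Pe = Mul (Cst p) (LL 0 Vl)"
definition Dene :: ex where "Dene = Add (Cst 1) (Mul (Mul Pe Ee) Vh)"
definition Sc :: ex where "Sc = Neg (Mul (Mul (Mul Pe Ee) Vc) (Inv Dene))"
definition D1e :: ex where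
  "D1e = Add (Neg Sc) (Neg (Mul (Mul (Mul (Cst p) Ee) (Add (Mul Sc Vh) Vc))
            (Add (Mul Vl (Add (LL 1 Vl) (Neg (Mul (Mul Vc Vh) (LL 0 Vl))))) (LL 0 Vl))))"
definition G2e :: ex where
  "G2e = Add (Cst 2) (Mul (Mul (Cst p) Ee) (Add (Add (LL 2 Vl) (Neg (Mul (Mul (Cst 2) (Mul Vc Vh)) (LL 1 Vl))))
            (Mul (Mul (Mul Vc Vh) (Mul Vc Vh)) (LL 0 Vl))))"
definition Sl :: ex where "Sl = Neg (Mul D1e (Inv G2e))"

abbreviation "evc h e \<equiv> evx L (lam h) (cs h) h e"

lemma ev_Ee: "evc h Ee = exp (- (lam h * cs h * h))"
  unfolding Ee_def by simp

lemma ev_Dene: "evc h Dene = 1 + p * L 0 (lam h) * exp (- (lam h * cs h * h)) * h"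
  unfolding Dene_def Pe_def ev_Ee[symmetric] by simp

lemma ev_Sc: "evc h Sc = Rc h"
  unfolding Sc_def Rc_def by (simp add: Pe_def Dene_def Ee_def divide_inverse)

lemma ev_D1e: "evc h D1e = D1 h"
  unfolding D1e_def D1_def ev_Sc[symmetric] by (simp add: Ee_def algebra_simps)

lemma ev_G2e: "evc h G2e = G2 h (cs h) (lam h)"
  unfolding G2e_def G2_def by (simp add: Ee_def power2_eq_square algebra_simps)

lemma ev_Sl: "evc h Sl = Rl h"
  unfolding Sl_def Rl_def by (simp add: ev_D1e ev_G2e divide_inverse)

lemma invs_Sc: "invs Sc = {Dene}"
  unfolding Sc_def Dene_def Pe_def Ee_def by simp

lemma invs_Sl: "invs Sl = {Dene, G2e}"
  unfolding Sl_def D1e_def G2e_def invs_Sc[symmetric] by (auto simp: Ee_def Sc_def Dene_def Pe_def)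

lemma invs_ok: assumes h: "h \<ge> 0" and a: "a \<in> invs Vc \<union> invs Sl \<union> invs Sc"
  shows "evc h a \<noteq> 0"
proof -
  have "a = Dene \<or> a = G2e" using a invs_Sl invs_Sc by auto
  thus ?thesis
  proof
    assume "a = Dene"
    have "0 \<le> p * L 0 (lam h) * exp (- (lam h * cs h * h)) * h" using p_gt L0_pos[of "lam h"] h by simp
    thus ?thesis using \<open>a = Dene\<close> ev_Dene by simp
  next
    assume "a = G2e"
    thus ?thesis using ev_G2e G2_ge2[of h "cs h" "lam h"] by simp
  qed
qed

lemma smooth_cs:
  "\<exists>f :: nat \<Rightarrow> real \<Rightarrow> real. f 0 = cstar K p \<and>
        (\<forall>n. \<forall>h\<ge>0. (f n has_real_derivative f (Suc n) h) (at h within {0..}))"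
proof (intro exI conjI allI impI)
  define f where "f n h = evc h ((dx Sl Sc ^^ n) Vc)" for n h
  show "f 0 = cstar K p" unfolding f_def by (rule ext) (simp add: cs_def)
  fix n :: nat and h :: real assume h: "h \<ge> 0"
  have dl: "(lam has_real_derivative evc h Sl) (at h within {0..})" using lam_deriv[OF h] ev_Sl by simp
  have dc: "(cs has_real_derivative evc h Sc) (at h within {0..})" using cs_deriv[OF h] ev_Sc by simp
  have nz: "\<forall>a\<in>invs ((dx Sl Sc ^^ n) Vc). evc h a \<noteq> 0"
    using invs_dxn[of n Sl Sc Vc] invs_ok[OF h] by blast
  have "((\<lambda>y. evc y ((dx Sl Sc ^^ n) Vc)) has_real_derivative evc h (dx Sl Sc ((dx Sl Sc ^^ n) Vc))) (at h within {0..})"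
    by (rule evx_deriv[OF L_deriv dl dc nz])
  thus "(f n has_real_derivative f (Suc n) h) (at h within {0..})"
    unfolding f_def by simp
qed


lemma LB_log_small: assumes h: "0 \<le> h" shows "2 * sqrt (ln p) / (1 + h) < cs h"
proof (rule LB_log[OF h])
  have "sqrt (ln p) > 0" using p_gt by simp
  thus "0 < 2 * sqrt (ln p) / (1 + h)" using h by simp
  show "2 * sqrt (ln p) / (1 + h) * (1 + h) \<le> 2 * sqrt (ln p)" using h by simp
qed

lemma LB_log_large: assumes h: "1 \<le> h" shows "sqrt (ln p) / h < cs h"
proof (rule LB_log)
  show "0 \<le> h" using h by simp
  have sp: "sqrt (ln p) > 0" using p_gt by simp
  thus "0 < sqrt (ln p) / h" using h by simp
  have "sqrt (ln p) / h * (1 + h) = sqrt (ln p) * ((1 + h) / h)" by simp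
  also have "\<dots> \<le> sqrt (ln p) * 2"
  proof -
    have "(1 + h) / h \<le> 2" using h by (simp add: divide_le_eq)
    thus ?thesis using sp by (intro mult_left_mono) auto
  qed
  finally show "sqrt (ln p) / h * (1 + h) \<le> 2 * sqrt (ln p)" by simp
qed

lemma UB_k1_large: assumes h: "1 \<le> h" shows "cs h < k1 K p / 2"
proof -
  have "cs h \<le> cs 1"
  proof (cases "h = 1")
    case False thus ?thesis using cs_strict_mono[of 1 h] h by simp
  qed simp
  also have "cs 1 < k1 K p / (1 + 1)" using UB_k1[of 1] by simp
  finally show ?thesis by simp
qed

lemma main_result:
  shows
    "(\<exists>f :: nat \<Rightarrow> real \<Rightarrow> real. f 0 = cstar K p \<and>
        (\<forall>n. \<forall>h\<ge>0. (f n has_real_derivative f (Suc n) h) (at h within {0..})))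
     \<and> (\<forall>a b. 0 \<le> a \<longrightarrow> a < b \<longrightarrow> cstar K p b < cstar K p a)
     \<and> k1 K p > 0 \<and> k2 K p > 0
     \<and> (\<forall>h. 0 \<le> h \<and> h \<le> 1 \<longrightarrow>
          2 * sqrt ((p - 1) / (p * (2 * h + h\<^sup>2) + 1)) < cstar K p h
        \<and> 2 * sqrt (ln p) / (1 + h) < cstar K p h
        \<and> cstar K p h < k1 K p / (1 + h)
        \<and> (h > 0 \<longrightarrow> cstar K p h < k2 K p / h))
     \<and> (\<forall>h\<ge>1.
          2 * sqrt ((p - 1) / (p * (2 * h + h\<^sup>2) + 1)) < cstar K p h
        \<and> sqrt (ln p) / h < cstar K p h
        \<and> cstar K p h < k1 K p / 2
        \<and> cstar K p h < k2 K p / sqrt h)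
     \<and> (\<exists>C1 C2. 0 < C1 \<and> C1 < C2 \<and> (\<forall>h\<ge>1. C1 / h \<le> cstar K p h \<and> cstar K p h \<le> C2 / h))"
proof -
  have ce: "cstar K p h = cs h" for h by (simp add: cs_def)
  obtain C2 where C2: "C2 > r0" "\<forall>h\<ge>1. cs h < C2 / h" using C2_bound by blast
  have part6: "\<exists>C1 C2. 0 < C1 \<and> C1 < C2 \<and> (\<forall>h\<ge>1. C1 / h \<le> cstar K p h \<and> cstar K p h \<le> C2 / h)"
  proof (rule exI[of _ r0], rule exI[of _ C2], intro conjI allI impI)
    show "0 < r0" by (rule r0_pos)
    show "r0 < C2" by (rule C2(1))
    fix h :: real assume h: "1 \<le> h"
    show "r0 / h \<le> cstar K p h" using LB_log_large[OF h] unfolding ce r0_def by simp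
    show "cstar K p h \<le> C2 / h" using C2(2) h unfolding ce by (simp add: less_imp_le)
  qed
  show ?thesis
    unfolding ce
    using smooth_cs cs_strict_mono k1_pos k2_pos LB1 LB_log_small UB_k1 UB_k2_small
      LB_log_large UB_k1_large UB_k2_large part6
    unfolding ce by auto
qed


end

theorem theorem1:
  fixes K :: "real \<Rightarrow> real" and p :: real
  assumes K_meas: "K \<in> borel_measurable lborel"
    and K_nonneg: "\<And>s. K s \<ge> 0"
    and K_sym: "\<And>s. K s = K (- s)"
    and K_int: "integrable lborel K" "(LINT s|lborel. K s) = 1"
    and K_exp: "\<And>l. integrable lborel (\<lambda>s. K s * exp (l * s))"
    and p_gt: "p > 1"
    and standing_unique: "\<And>h. h \<ge> 0 \<Longrightarrow> \<exists>!(z, \<epsilon>). z > 0 \<and> \<epsilon> > 0 \<and> psi K p h z \<epsilon> = 0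
                 \<and> deriv (\<lambda>y. psi K p h y \<epsilon>) z = 0"
    and standing_largest: "\<And>h. h \<ge> 0 \<Longrightarrow>
                 eps0 K p h = (GREATEST \<epsilon>. \<epsilon> > 0 \<and> (\<exists>z>0. psi K p h z \<epsilon> = 0))"
    and standing_pos: "\<And>h \<epsilon> z. h \<ge> 0 \<Longrightarrow> \<epsilon> > eps0 K p h \<Longrightarrow> z > 0 \<Longrightarrow> psi K p h z \<epsilon> > 0"
  shows
    "(\<exists>f :: nat \<Rightarrow> real \<Rightarrow> real. f 0 = cstar K p \<and>
        (\<forall>n. \<forall>h\<ge>0. (f n has_real_derivative f (Suc n) h) (at h within {0..})))
     \<and> (\<forall>a b. 0 \<le> a \<longrightarrow> a < b \<longrightarrow> cstar K p b < cstar K p a)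
     \<and> k1 K p > 0 \<and> k2 K p > 0
     \<and> (\<forall>h. 0 \<le> h \<and> h \<le> 1 \<longrightarrow>
          2 * sqrt ((p - 1) / (p * (2 * h + h\<^sup>2) + 1)) < cstar K p h
        \<and> 2 * sqrt (ln p) / (1 + h) < cstar K p h
        \<and> cstar K p h < k1 K p / (1 + h)
        \<and> (h > 0 \<longrightarrow> cstar K p h < k2 K p / h))
     \<and> (\<forall>h\<ge>1.
          2 * sqrt ((p - 1) / (p * (2 * h + h\<^sup>2) + 1)) < cstar K p h
        \<and> sqrt (ln p) / h < cstar K p h
        \<and> cstar K p h < k1 K p / 2
        \<and> cstar K p h < k2 K p / sqrt h)
     \<and> (\<exists>C1 C2. 0 < C1 \<and> C1 < C2 \<and> (\<forall>h\<ge>1. C1 / h \<le> cstar K p h \<and> cstar K p h \<le> C2 / h))"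
proof -
  interpret kern K p
    by (rule kern.intro[OF K_meas K_nonneg K_sym K_int(1) K_int(2) K_exp p_gt standing_unique standing_pos])
  show ?thesis by (rule main_result)
qed

end
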